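(* Let $(f_0,\dots,f_4)$ be a rational solution of $A_4(\alpha_0,\dots,\alpha_4)$ and fix $i\in\{0,\dots,4\}$. (1) If $c\in\mathbb{C}\setminus\{0\}$ is a pole of $f_i$, then $-c$ is also a pole of $f_i$ and $\mathrm{Res}_{t=c}f_i=\mathrm{Res}_{t=-c}f_i$. (2) If $\mathrm{Res}_{t=\infty}f_i$ is an even integer, then $t=0$ is not a pole of $f_i$, and therefore $f_i=a_{i,1}t+\sum_{j=1}^{n_i}\left(\frac{\varepsilon_{i,j}}{t-c_{i,j}}+\frac{\varepsilon_{i,j}}{t+c_{i,j}}\right)$ with $a_{i,1}\in\{0,\pm1,\frac13,\frac15\}$, $\varepsilon_{i,j}\in\{\pm1,\pm3\}$ and $c_{i,j}\neq0$. (3) If $\mathrm{Res}_{t=\infty}f_i$ is an odd integer, then $t=0$ is a pole of $f_i$, and therefore $f_i=a_{i,1}t+\frac{\varepsilon_{i,0}}{t}+\sum_{j=1}^{n_i}\left(\frac{\varepsilon_{i,j}}{t-c_{i,j}}+\frac{\varepsilon_{i,j}}{t+c_{i,j}}\right)$ with $\varepsilon_{i,0},\varepsilon_{i,j}\in\{\pm1,\pm3\}$ and $c_{i,j}\neq0$.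
   Context: The $A_4^{(1)}$ Painlevé equation $A_4(\alpha_0,\dots,\alpha_4)$ with complex parameters $\alpha_j$ is the system for five functions $f_0,\dots,f_4$ of $t$ (indices in $\mathbb{Z}/5\mathbb{Z}$, ${}'=d/dt$): $f_j'=f_j(f_{j+1}-f_{j+2}+f_{j+3}-f_{j+4})+\alpha_j$ ($j=0,\dots,4$), $f_0+\dots+f_4=t$; hence $\sum_j\alpha_j=1$. A rational solution is a tuple of rational functions of $t$ satisfying it. $\mathrm{Res}_{t=\infty}f$ denotes the residue at infinity, i.e. minus the coefficient of $t^{-1}$ in the Laurent expansion of $f$ at $t=\infty$. *)

theory Defs
  imports "HOL-Complex_Analysis.Complex_Analysis" "HOL-Computational_Algebra.Polynomial"
begin

definition rat_fun :: "(complex \<Rightarrow> complex) \<Rightarrow> bool" where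
  "rat_fun f \<longleftrightarrow> (\<exists>p q. q \<noteq> 0 \<and> f = (\<lambda>t. poly p t / poly q t))"

text \<open>Rational solution of A4(alpha_0..alpha_4); indices j < 5 read mod 5.
  The ODEs and the constraint hold identically, i.e. at all but finitely many t.\<close>
definition A4_rational_solution ::
  "(nat \<Rightarrow> complex) \<Rightarrow> (nat \<Rightarrow> complex \<Rightarrow> complex) \<Rightarrow> bool" where
  "A4_rational_solution \<alpha> f \<longleftrightarrow>
     (\<forall>j<5. rat_fun (f j)) \<and>
     (\<forall>\<^sub>F t in cofinite.
        (\<forall>j<5. (f j has_field_derivative
                 (f j t * (f ((j+1) mod 5) t - f ((j+2) mod 5) t
                           + f ((j+3) mod 5) t - f ((j+4) mod 5) t) + \<alpha> j)) (at t))
        \<and> (\<Sum>j<5. f j t) = t)"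

text \<open>Residue at infinity: minus the coefficient of t^(-1) of the Laurent expansion at infinity,
  i.e. Res_{t=inf} f = - Res_{w=0} f(1/w)/w^2.\<close>
definition res_inf :: "(complex \<Rightarrow> complex) \<Rightarrow> complex" where
  "res_inf f = - residue (\<lambda>w. f (1 / w) / w ^ 2) 0"

end

theory Submission
  imports Defs
begin

unbundle fps_syntax

lemma AL1:
  fixes x0 x1 x2 x3 x4 :: complex
  assumes "x0 * (x1 - x2 + x3 - x4) = 0" "x1 * (x2 - x3 + x4 - x0) = 0"
   "x2 * (x3 - x4 + x0 - x1) = 0" "x3 * (x4 - x0 + x1 - x2) = 0" "x4 * (x0 - x1 + x2 - x3) = 0"
   "x0 + x1 + x2 + x3 + x4 = 0"
  shows "x0 = 0"
  using assms by algebra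

lemma AL3:
  fixes x0 x1 x2 x3 x4 :: complex
  assumes "x0 * (1 + (x1 - x2 + x3 - x4)) = 0" "x1 * (1 + (x2 - x3 + x4 - x0)) = 0"
   "x2 * (1 + (x3 - x4 + x0 - x1)) = 0" "x3 * (1 + (x4 - x0 + x1 - x2)) = 0"
   "x4 * (1 + (x0 - x1 + x2 - x3)) = 0"
   "x0 + x1 + x2 + x3 + x4 = 0"
  shows "x0 = 0 \<or> x0 = 1 \<or> x0 = -1 \<or> x0 = 3 \<or> x0 = -3"
  using assms by algebra

lemma AL2a:
  fixes x0 x1 x2 x3 x4 :: complex
  assumes "x0 * (x1 - x2 + x3 - x4) = 0" "x1 * (x2 - x3 + x4 - x0) = 0"
   "x2 * (x3 - x4 + x0 - x1) = 0" "x3 * (x4 - x0 + x1 - x2) = 0" "x4 * (x0 - x1 + x2 - x3) = 0"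
   "x0 + x1 + x2 + x3 + x4 = 1"
  shows "x0 = 0 \<or> x0 = 1 \<or> x0 = -1 \<or> x0 = 1/3 \<or> x0 = 1/5"
  using assms by algebra

lemma AL2b:
  fixes x0 x1 x2 x3 x4 y0 y1 y2 y3 y4 :: complex
  assumes "x0 * (x1 - x2 + x3 - x4) = 0" "x1 * (x2 - x3 + x4 - x0) = 0"
   "x2 * (x3 - x4 + x0 - x1) = 0" "x3 * (x4 - x0 + x1 - x2) = 0" "x4 * (x0 - x1 + x2 - x3) = 0"
   "x0 + x1 + x2 + x3 + x4 = 1"
  "y0 * (x1 - x2 + x3 - x4) + x0 * (y1 - y2 + y3 - y4) = 0" 
  "y1 * (x2 - x3 + x4 - x0) + x1 * (y2 - y3 + y4 - y0) = 0" 
  "y2 * (x3 - x4 + x0 - x1) + x2 * (y3 - y4 + y0 - y1) = 0" 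
  "y3 * (x4 - x0 + x1 - x2) + x3 * (y4 - y0 + y1 - y2) = 0" 
  "y4 * (x0 - x1 + x2 - x3) + x4 * (y0 - y1 + y2 - y3) = 0" 
   "y0 + y1 + y2 + y3 + y4 = 0"
  shows "y0 = 0"
  using assms by algebra


definition Bv :: "(nat \<Rightarrow> 'a::ab_group_add) \<Rightarrow> nat \<Rightarrow> 'a" where
  "Bv x j = x ((j+1) mod 5) - x ((j+2) mod 5) + x ((j+3) mod 5) - x ((j+4) mod 5)"

lemma five_cases: "(j::nat) < 5 \<Longrightarrow> j = 0 \<or> j = 1 \<or> j = 2 \<or> j = 3 \<or> j = 4"
  by auto

lemma sum5: "(\<Sum>j<5. x j) = x 0 + x 1 + x 2 + x 3 + x (4::nat)"
  by (simp add: eval_nat_numeral)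

lemma Bv_0: "Bv x 0 = x 1 - x 2 + x 3 - x 4" by (simp add: Bv_def numeral_2_eq_2)
lemma Bv_1: "Bv x 1 = x 2 - x 3 + x 4 - x 0" by (simp add: Bv_def numeral_2_eq_2)
lemma Bv_2: "Bv x 2 = x 3 - x 4 + x 0 - x 1" by (simp add: Bv_def numeral_2_eq_2)
lemma Bv_3: "Bv x 3 = x 4 - x 0 + x 1 - x 2" by (simp add: Bv_def numeral_2_eq_2)
lemma Bv_4: "Bv x 4 = x 0 - x 1 + x 2 - x 3" by (simp add: Bv_def numeral_2_eq_2)
lemmas Bv_simps = Bv_0 Bv_1 Bv_2 Bv_3 Bv_4

lemma AL1v:
  fixes x :: "nat \<Rightarrow> complex"
  assumes h: "\<forall>j<5. x j * Bv x j = 0" and s: "(\<Sum>j<5. x j) = 0" and j: "j < 5"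
  shows "x j = 0"
proof -
  have s': "x 0 + x 1 + x 2 + x 3 + x 4 = 0" using s by (simp add: sum5)
  have h0: "x 0 * Bv x 0 = 0" using h by auto
  have h1: "x 1 * Bv x 1 = 0" using h by auto
  have h2: "x 2 * Bv x 2 = 0" using h by auto
  have h3: "x 3 * Bv x 3 = 0" using h by auto
  have h4: "x 4 * Bv x 4 = 0" using h by auto
  from five_cases[OF j] show ?thesis
  proof (elim disjE)
    assume jj: "j = 0"
    have "x 0 = 0"
    proof (rule AL1)
      show "x 0 * (x 1 - x 2 + x 3 - x 4) = 0" using h0 by (simp only: Bv_simps)
      show "x 1 * (x 2 - x 3 + x 4 - x 0) = 0" using h1 by (simp only: Bv_simps)
      show "x 2 * (x 3 - x 4 + x 0 - x 1) = 0" using h2 by (simp only: Bv_simps)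
      show "x 3 * (x 4 - x 0 + x 1 - x 2) = 0" using h3 by (simp only: Bv_simps)
      show "x 4 * (x 0 - x 1 + x 2 - x 3) = 0" using h4 by (simp only: Bv_simps)
      show "x 0 + x 1 + x 2 + x 3 + x 4 = 0" using s' by (simp add: algebra_simps)
    qed
    thus ?thesis using jj by simp
  next
    assume jj: "j = 1"
    have "x 1 = 0"
    proof (rule AL1)
      show "x 1 * (x 2 - x 3 + x 4 - x 0) = 0" using h1 by (simp only: Bv_simps)
      show "x 2 * (x 3 - x 4 + x 0 - x 1) = 0" using h2 by (simp only: Bv_simps)
      show "x 3 * (x 4 - x 0 + x 1 - x 2) = 0" using h3 by (simp only: Bv_simps)
      show "x 4 * (x 0 - x 1 + x 2 - x 3) = 0" using h4 by (simp only: Bv_simps)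
      show "x 0 * (x 1 - x 2 + x 3 - x 4) = 0" using h0 by (simp only: Bv_simps)
      show "x 1 + x 2 + x 3 + x 4 + x 0 = 0" using s' by (simp add: algebra_simps)
    qed
    thus ?thesis using jj by simp
  next
    assume jj: "j = 2"
    have "x 2 = 0"
    proof (rule AL1)
      show "x 2 * (x 3 - x 4 + x 0 - x 1) = 0" using h2 by (simp only: Bv_simps)
      show "x 3 * (x 4 - x 0 + x 1 - x 2) = 0" using h3 by (simp only: Bv_simps)
      show "x 4 * (x 0 - x 1 + x 2 - x 3) = 0" using h4 by (simp only: Bv_simps)
      show "x 0 * (x 1 - x 2 + x 3 - x 4) = 0" using h0 by (simp only: Bv_simps)
      show "x 1 * (x 2 - x 3 + x 4 - x 0) = 0" using h1 by (simp only: Bv_simps)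
      show "x 2 + x 3 + x 4 + x 0 + x 1 = 0" using s' by (simp add: algebra_simps)
    qed
    thus ?thesis using jj by simp
  next
    assume jj: "j = 3"
    have "x 3 = 0"
    proof (rule AL1)
      show "x 3 * (x 4 - x 0 + x 1 - x 2) = 0" using h3 by (simp only: Bv_simps)
      show "x 4 * (x 0 - x 1 + x 2 - x 3) = 0" using h4 by (simp only: Bv_simps)
      show "x 0 * (x 1 - x 2 + x 3 - x 4) = 0" using h0 by (simp only: Bv_simps)
      show "x 1 * (x 2 - x 3 + x 4 - x 0) = 0" using h1 by (simp only: Bv_simps)
      show "x 2 * (x 3 - x 4 + x 0 - x 1) = 0" using h2 by (simp only: Bv_simps)
      show "x 3 + x 4 + x 0 + x 1 + x 2 = 0" using s' by (simp add: algebra_simps)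
    qed
    thus ?thesis using jj by simp
  next
    assume jj: "j = 4"
    have "x 4 = 0"
    proof (rule AL1)
      show "x 4 * (x 0 - x 1 + x 2 - x 3) = 0" using h4 by (simp only: Bv_simps)
      show "x 0 * (x 1 - x 2 + x 3 - x 4) = 0" using h0 by (simp only: Bv_simps)
      show "x 1 * (x 2 - x 3 + x 4 - x 0) = 0" using h1 by (simp only: Bv_simps)
      show "x 2 * (x 3 - x 4 + x 0 - x 1) = 0" using h2 by (simp only: Bv_simps)
      show "x 3 * (x 4 - x 0 + x 1 - x 2) = 0" using h3 by (simp only: Bv_simps)
      show "x 4 + x 0 + x 1 + x 2 + x 3 = 0" using s' by (simp add: algebra_simps)
    qed
    thus ?thesis using jj by simp
  qed
qed

lemma AL3v:
  fixes x :: "nat \<Rightarrow> complex"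
  assumes h: "\<forall>j<5. x j * (1 + Bv x j) = 0" and s: "(\<Sum>j<5. x j) = 0" and j: "j < 5"
  shows "x j = 0 \<or> x j = 1 \<or> x j = -1 \<or> x j = 3 \<or> x j = -3"
proof -
  have s': "x 0 + x 1 + x 2 + x 3 + x 4 = 0" using s by (simp add: sum5)
  have h0: "x 0 * (1 + Bv x 0) = 0" using h by auto
  have h1: "x 1 * (1 + Bv x 1) = 0" using h by auto
  have h2: "x 2 * (1 + Bv x 2) = 0" using h by auto
  have h3: "x 3 * (1 + Bv x 3) = 0" using h by auto
  have h4: "x 4 * (1 + Bv x 4) = 0" using h by auto
  from five_cases[OF j] show ?thesis
  proof (elim disjE)
    assume jj: "j = 0"
    have "x 0 = 0 \<or> x 0 = 1 \<or> x 0 = -1 \<or> x 0 = 3 \<or> x 0 = -3"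
    proof (rule AL3)
      show "x 0 * (1 + (x 1 - x 2 + x 3 - x 4)) = 0" using h0 by (simp only: Bv_simps)
      show "x 1 * (1 + (x 2 - x 3 + x 4 - x 0)) = 0" using h1 by (simp only: Bv_simps)
      show "x 2 * (1 + (x 3 - x 4 + x 0 - x 1)) = 0" using h2 by (simp only: Bv_simps)
      show "x 3 * (1 + (x 4 - x 0 + x 1 - x 2)) = 0" using h3 by (simp only: Bv_simps)
      show "x 4 * (1 + (x 0 - x 1 + x 2 - x 3)) = 0" using h4 by (simp only: Bv_simps)
      show "x 0 + x 1 + x 2 + x 3 + x 4 = 0" using s' by (simp add: algebra_simps)
    qed
    thus ?thesis using jj by simp
  next
    assume jj: "j = 1"
    have "x 1 = 0 \<or> x 1 = 1 \<or> x 1 = -1 \<or> x 1 = 3 \<or> x 1 = -3"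
    proof (rule AL3)
      show "x 1 * (1 + (x 2 - x 3 + x 4 - x 0)) = 0" using h1 by (simp only: Bv_simps)
      show "x 2 * (1 + (x 3 - x 4 + x 0 - x 1)) = 0" using h2 by (simp only: Bv_simps)
      show "x 3 * (1 + (x 4 - x 0 + x 1 - x 2)) = 0" using h3 by (simp only: Bv_simps)
      show "x 4 * (1 + (x 0 - x 1 + x 2 - x 3)) = 0" using h4 by (simp only: Bv_simps)
      show "x 0 * (1 + (x 1 - x 2 + x 3 - x 4)) = 0" using h0 by (simp only: Bv_simps)
      show "x 1 + x 2 + x 3 + x 4 + x 0 = 0" using s' by (simp add: algebra_simps)
    qed
    thus ?thesis using jj by simp
  next
    assume jj: "j = 2"
    have "x 2 = 0 \<or> x 2 = 1 \<or> x 2 = -1 \<or> x 2 = 3 \<or> x 2 = -3"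
    proof (rule AL3)
      show "x 2 * (1 + (x 3 - x 4 + x 0 - x 1)) = 0" using h2 by (simp only: Bv_simps)
      show "x 3 * (1 + (x 4 - x 0 + x 1 - x 2)) = 0" using h3 by (simp only: Bv_simps)
      show "x 4 * (1 + (x 0 - x 1 + x 2 - x 3)) = 0" using h4 by (simp only: Bv_simps)
      show "x 0 * (1 + (x 1 - x 2 + x 3 - x 4)) = 0" using h0 by (simp only: Bv_simps)
      show "x 1 * (1 + (x 2 - x 3 + x 4 - x 0)) = 0" using h1 by (simp only: Bv_simps)
      show "x 2 + x 3 + x 4 + x 0 + x 1 = 0" using s' by (simp add: algebra_simps)
    qed
    thus ?thesis using jj by simp
  next
    assume jj: "j = 3"
    have "x 3 = 0 \<or> x 3 = 1 \<or> x 3 = -1 \<or> x 3 = 3 \<or> x 3 = -3"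
    proof (rule AL3)
      show "x 3 * (1 + (x 4 - x 0 + x 1 - x 2)) = 0" using h3 by (simp only: Bv_simps)
      show "x 4 * (1 + (x 0 - x 1 + x 2 - x 3)) = 0" using h4 by (simp only: Bv_simps)
      show "x 0 * (1 + (x 1 - x 2 + x 3 - x 4)) = 0" using h0 by (simp only: Bv_simps)
      show "x 1 * (1 + (x 2 - x 3 + x 4 - x 0)) = 0" using h1 by (simp only: Bv_simps)
      show "x 2 * (1 + (x 3 - x 4 + x 0 - x 1)) = 0" using h2 by (simp only: Bv_simps)
      show "x 3 + x 4 + x 0 + x 1 + x 2 = 0" using s' by (simp add: algebra_simps)
    qed
    thus ?thesis using jj by simp
  next
    assume jj: "j = 4"
    have "x 4 = 0 \<or> x 4 = 1 \<or> x 4 = -1 \<or> x 4 = 3 \<or> x 4 = -3"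
    proof (rule AL3)
      show "x 4 * (1 + (x 0 - x 1 + x 2 - x 3)) = 0" using h4 by (simp only: Bv_simps)
      show "x 0 * (1 + (x 1 - x 2 + x 3 - x 4)) = 0" using h0 by (simp only: Bv_simps)
      show "x 1 * (1 + (x 2 - x 3 + x 4 - x 0)) = 0" using h1 by (simp only: Bv_simps)
      show "x 2 * (1 + (x 3 - x 4 + x 0 - x 1)) = 0" using h2 by (simp only: Bv_simps)
      show "x 3 * (1 + (x 4 - x 0 + x 1 - x 2)) = 0" using h3 by (simp only: Bv_simps)
      show "x 4 + x 0 + x 1 + x 2 + x 3 = 0" using s' by (simp add: algebra_simps)
    qed
    thus ?thesis using jj by simp
  qed
qed

lemma AL2av:
  fixes x :: "nat \<Rightarrow> complex"
  assumes h: "\<forall>j<5. x j * Bv x j = 0" and s: "(\<Sum>j<5. x j) = 1" and j: "j < 5"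
  shows "x j = 0 \<or> x j = 1 \<or> x j = -1 \<or> x j = 1/3 \<or> x j = 1/5"
proof -
  have s': "x 0 + x 1 + x 2 + x 3 + x 4 = 1" using s by (simp add: sum5)
  have h0: "x 0 * Bv x 0 = 0" using h by auto
  have h1: "x 1 * Bv x 1 = 0" using h by auto
  have h2: "x 2 * Bv x 2 = 0" using h by auto
  have h3: "x 3 * Bv x 3 = 0" using h by auto
  have h4: "x 4 * Bv x 4 = 0" using h by auto
  from five_cases[OF j] show ?thesis
  proof (elim disjE)
    assume jj: "j = 0"
    have "x 0 = 0 \<or> x 0 = 1 \<or> x 0 = -1 \<or> x 0 = 1/3 \<or> x 0 = 1/5"
    proof (rule AL2a)
      show "x 0 * (x 1 - x 2 + x 3 - x 4) = 0" using h0 by (simp only: Bv_simps)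
      show "x 1 * (x 2 - x 3 + x 4 - x 0) = 0" using h1 by (simp only: Bv_simps)
      show "x 2 * (x 3 - x 4 + x 0 - x 1) = 0" using h2 by (simp only: Bv_simps)
      show "x 3 * (x 4 - x 0 + x 1 - x 2) = 0" using h3 by (simp only: Bv_simps)
      show "x 4 * (x 0 - x 1 + x 2 - x 3) = 0" using h4 by (simp only: Bv_simps)
      show "x 0 + x 1 + x 2 + x 3 + x 4 = 1" using s' by (simp add: algebra_simps)
    qed
    thus ?thesis using jj by simp
  next
    assume jj: "j = 1"
    have "x 1 = 0 \<or> x 1 = 1 \<or> x 1 = -1 \<or> x 1 = 1/3 \<or> x 1 = 1/5"
    proof (rule AL2a)
      show "x 1 * (x 2 - x 3 + x 4 - x 0) = 0" using h1 by (simp only: Bv_simps)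
      show "x 2 * (x 3 - x 4 + x 0 - x 1) = 0" using h2 by (simp only: Bv_simps)
      show "x 3 * (x 4 - x 0 + x 1 - x 2) = 0" using h3 by (simp only: Bv_simps)
      show "x 4 * (x 0 - x 1 + x 2 - x 3) = 0" using h4 by (simp only: Bv_simps)
      show "x 0 * (x 1 - x 2 + x 3 - x 4) = 0" using h0 by (simp only: Bv_simps)
      show "x 1 + x 2 + x 3 + x 4 + x 0 = 1" using s' by (simp add: algebra_simps)
    qed
    thus ?thesis using jj by simp
  next
    assume jj: "j = 2"
    have "x 2 = 0 \<or> x 2 = 1 \<or> x 2 = -1 \<or> x 2 = 1/3 \<or> x 2 = 1/5"
    proof (rule AL2a)
      show "x 2 * (x 3 - x 4 + x 0 - x 1) = 0" using h2 by (simp only: Bv_simps)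
      show "x 3 * (x 4 - x 0 + x 1 - x 2) = 0" using h3 by (simp only: Bv_simps)
      show "x 4 * (x 0 - x 1 + x 2 - x 3) = 0" using h4 by (simp only: Bv_simps)
      show "x 0 * (x 1 - x 2 + x 3 - x 4) = 0" using h0 by (simp only: Bv_simps)
      show "x 1 * (x 2 - x 3 + x 4 - x 0) = 0" using h1 by (simp only: Bv_simps)
      show "x 2 + x 3 + x 4 + x 0 + x 1 = 1" using s' by (simp add: algebra_simps)
    qed
    thus ?thesis using jj by simp
  next
    assume jj: "j = 3"
    have "x 3 = 0 \<or> x 3 = 1 \<or> x 3 = -1 \<or> x 3 = 1/3 \<or> x 3 = 1/5"
    proof (rule AL2a)
      show "x 3 * (x 4 - x 0 + x 1 - x 2) = 0" using h3 by (simp only: Bv_simps)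
      show "x 4 * (x 0 - x 1 + x 2 - x 3) = 0" using h4 by (simp only: Bv_simps)
      show "x 0 * (x 1 - x 2 + x 3 - x 4) = 0" using h0 by (simp only: Bv_simps)
      show "x 1 * (x 2 - x 3 + x 4 - x 0) = 0" using h1 by (simp only: Bv_simps)
      show "x 2 * (x 3 - x 4 + x 0 - x 1) = 0" using h2 by (simp only: Bv_simps)
      show "x 3 + x 4 + x 0 + x 1 + x 2 = 1" using s' by (simp add: algebra_simps)
    qed
    thus ?thesis using jj by simp
  next
    assume jj: "j = 4"
    have "x 4 = 0 \<or> x 4 = 1 \<or> x 4 = -1 \<or> x 4 = 1/3 \<or> x 4 = 1/5"
    proof (rule AL2a)
      show "x 4 * (x 0 - x 1 + x 2 - x 3) = 0" using h4 by (simp only: Bv_simps)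
      show "x 0 * (x 1 - x 2 + x 3 - x 4) = 0" using h0 by (simp only: Bv_simps)
      show "x 1 * (x 2 - x 3 + x 4 - x 0) = 0" using h1 by (simp only: Bv_simps)
      show "x 2 * (x 3 - x 4 + x 0 - x 1) = 0" using h2 by (simp only: Bv_simps)
      show "x 3 * (x 4 - x 0 + x 1 - x 2) = 0" using h3 by (simp only: Bv_simps)
      show "x 4 + x 0 + x 1 + x 2 + x 3 = 1" using s' by (simp add: algebra_simps)
    qed
    thus ?thesis using jj by simp
  qed
qed

lemma AL2bv:
  fixes x y :: "nat \<Rightarrow> complex"
  assumes h: "\<forall>j<5. x j * Bv x j = 0" and s: "(\<Sum>j<5. x j) = 1"
    and hy: "\<forall>j<5. y j * Bv x j + x j * Bv y j = 0" and sy: "(\<Sum>j<5. y j) = 0" and j: "j < 5"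
  shows "y j = 0"
proof -
  have s': "x 0 + x 1 + x 2 + x 3 + x 4 = 1" using s by (simp add: sum5)
  have sy': "y 0 + y 1 + y 2 + y 3 + y 4 = 0" using sy by (simp add: sum5)
  have h0: "x 0 * Bv x 0 = 0" using h by auto
  have g0: "y 0 * Bv x 0 + x 0 * Bv y 0 = 0" using hy by auto
  have h1: "x 1 * Bv x 1 = 0" using h by auto
  have g1: "y 1 * Bv x 1 + x 1 * Bv y 1 = 0" using hy by auto
  have h2: "x 2 * Bv x 2 = 0" using h by auto
  have g2: "y 2 * Bv x 2 + x 2 * Bv y 2 = 0" using hy by auto
  have h3: "x 3 * Bv x 3 = 0" using h by auto
  have g3: "y 3 * Bv x 3 + x 3 * Bv y 3 = 0" using hy by auto
  have h4: "x 4 * Bv x 4 = 0" using h by auto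
  have g4: "y 4 * Bv x 4 + x 4 * Bv y 4 = 0" using hy by auto
  from five_cases[OF j] show ?thesis
  proof (elim disjE)
    assume jj: "j = 0"
    have "y 0 = 0"
    proof (rule AL2b)
      show "x 0 * (x 1 - x 2 + x 3 - x 4) = 0" using h0 by (simp only: Bv_simps)
      show "x 1 * (x 2 - x 3 + x 4 - x 0) = 0" using h1 by (simp only: Bv_simps)
      show "x 2 * (x 3 - x 4 + x 0 - x 1) = 0" using h2 by (simp only: Bv_simps)
      show "x 3 * (x 4 - x 0 + x 1 - x 2) = 0" using h3 by (simp only: Bv_simps)
      show "x 4 * (x 0 - x 1 + x 2 - x 3) = 0" using h4 by (simp only: Bv_simps)
      show "x 0 + x 1 + x 2 + x 3 + x 4 = 1" using s' by (simp add: algebra_simps)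
      show "y 0 * (x 1 - x 2 + x 3 - x 4) + x 0 * (y 1 - y 2 + y 3 - y 4) = 0" using g0 by (simp only: Bv_simps)
      show "y 1 * (x 2 - x 3 + x 4 - x 0) + x 1 * (y 2 - y 3 + y 4 - y 0) = 0" using g1 by (simp only: Bv_simps)
      show "y 2 * (x 3 - x 4 + x 0 - x 1) + x 2 * (y 3 - y 4 + y 0 - y 1) = 0" using g2 by (simp only: Bv_simps)
      show "y 3 * (x 4 - x 0 + x 1 - x 2) + x 3 * (y 4 - y 0 + y 1 - y 2) = 0" using g3 by (simp only: Bv_simps)
      show "y 4 * (x 0 - x 1 + x 2 - x 3) + x 4 * (y 0 - y 1 + y 2 - y 3) = 0" using g4 by (simp only: Bv_simps)
      show "y 0 + y 1 + y 2 + y 3 + y 4 = 0" using sy' by (simp add: algebra_simps)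
    qed
    thus ?thesis using jj by simp
  next
    assume jj: "j = 1"
    have "y 1 = 0"
    proof (rule AL2b)
      show "x 1 * (x 2 - x 3 + x 4 - x 0) = 0" using h1 by (simp only: Bv_simps)
      show "x 2 * (x 3 - x 4 + x 0 - x 1) = 0" using h2 by (simp only: Bv_simps)
      show "x 3 * (x 4 - x 0 + x 1 - x 2) = 0" using h3 by (simp only: Bv_simps)
      show "x 4 * (x 0 - x 1 + x 2 - x 3) = 0" using h4 by (simp only: Bv_simps)
      show "x 0 * (x 1 - x 2 + x 3 - x 4) = 0" using h0 by (simp only: Bv_simps)
      show "x 1 + x 2 + x 3 + x 4 + x 0 = 1" using s' by (simp add: algebra_simps)
      show "y 1 * (x 2 - x 3 + x 4 - x 0) + x 1 * (y 2 - y 3 + y 4 - y 0) = 0" using g1 by (simp only: Bv_simps)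
      show "y 2 * (x 3 - x 4 + x 0 - x 1) + x 2 * (y 3 - y 4 + y 0 - y 1) = 0" using g2 by (simp only: Bv_simps)
      show "y 3 * (x 4 - x 0 + x 1 - x 2) + x 3 * (y 4 - y 0 + y 1 - y 2) = 0" using g3 by (simp only: Bv_simps)
      show "y 4 * (x 0 - x 1 + x 2 - x 3) + x 4 * (y 0 - y 1 + y 2 - y 3) = 0" using g4 by (simp only: Bv_simps)
      show "y 0 * (x 1 - x 2 + x 3 - x 4) + x 0 * (y 1 - y 2 + y 3 - y 4) = 0" using g0 by (simp only: Bv_simps)
      show "y 1 + y 2 + y 3 + y 4 + y 0 = 0" using sy' by (simp add: algebra_simps)
    qed
    thus ?thesis using jj by simp
  next
    assume jj: "j = 2"
    have "y 2 = 0"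
    proof (rule AL2b)
      show "x 2 * (x 3 - x 4 + x 0 - x 1) = 0" using h2 by (simp only: Bv_simps)
      show "x 3 * (x 4 - x 0 + x 1 - x 2) = 0" using h3 by (simp only: Bv_simps)
      show "x 4 * (x 0 - x 1 + x 2 - x 3) = 0" using h4 by (simp only: Bv_simps)
      show "x 0 * (x 1 - x 2 + x 3 - x 4) = 0" using h0 by (simp only: Bv_simps)
      show "x 1 * (x 2 - x 3 + x 4 - x 0) = 0" using h1 by (simp only: Bv_simps)
      show "x 2 + x 3 + x 4 + x 0 + x 1 = 1" using s' by (simp add: algebra_simps)
      show "y 2 * (x 3 - x 4 + x 0 - x 1) + x 2 * (y 3 - y 4 + y 0 - y 1) = 0" using g2 by (simp only: Bv_simps)
      show "y 3 * (x 4 - x 0 + x 1 - x 2) + x 3 * (y 4 - y 0 + y 1 - y 2) = 0" using g3 by (simp only: Bv_simps)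
      show "y 4 * (x 0 - x 1 + x 2 - x 3) + x 4 * (y 0 - y 1 + y 2 - y 3) = 0" using g4 by (simp only: Bv_simps)
      show "y 0 * (x 1 - x 2 + x 3 - x 4) + x 0 * (y 1 - y 2 + y 3 - y 4) = 0" using g0 by (simp only: Bv_simps)
      show "y 1 * (x 2 - x 3 + x 4 - x 0) + x 1 * (y 2 - y 3 + y 4 - y 0) = 0" using g1 by (simp only: Bv_simps)
      show "y 2 + y 3 + y 4 + y 0 + y 1 = 0" using sy' by (simp add: algebra_simps)
    qed
    thus ?thesis using jj by simp
  next
    assume jj: "j = 3"
    have "y 3 = 0"
    proof (rule AL2b)
      show "x 3 * (x 4 - x 0 + x 1 - x 2) = 0" using h3 by (simp only: Bv_simps)
      show "x 4 * (x 0 - x 1 + x 2 - x 3) = 0" using h4 by (simp only: Bv_simps)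
      show "x 0 * (x 1 - x 2 + x 3 - x 4) = 0" using h0 by (simp only: Bv_simps)
      show "x 1 * (x 2 - x 3 + x 4 - x 0) = 0" using h1 by (simp only: Bv_simps)
      show "x 2 * (x 3 - x 4 + x 0 - x 1) = 0" using h2 by (simp only: Bv_simps)
      show "x 3 + x 4 + x 0 + x 1 + x 2 = 1" using s' by (simp add: algebra_simps)
      show "y 3 * (x 4 - x 0 + x 1 - x 2) + x 3 * (y 4 - y 0 + y 1 - y 2) = 0" using g3 by (simp only: Bv_simps)
      show "y 4 * (x 0 - x 1 + x 2 - x 3) + x 4 * (y 0 - y 1 + y 2 - y 3) = 0" using g4 by (simp only: Bv_simps)
      show "y 0 * (x 1 - x 2 + x 3 - x 4) + x 0 * (y 1 - y 2 + y 3 - y 4) = 0" using g0 by (simp only: Bv_simps)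
      show "y 1 * (x 2 - x 3 + x 4 - x 0) + x 1 * (y 2 - y 3 + y 4 - y 0) = 0" using g1 by (simp only: Bv_simps)
      show "y 2 * (x 3 - x 4 + x 0 - x 1) + x 2 * (y 3 - y 4 + y 0 - y 1) = 0" using g2 by (simp only: Bv_simps)
      show "y 3 + y 4 + y 0 + y 1 + y 2 = 0" using sy' by (simp add: algebra_simps)
    qed
    thus ?thesis using jj by simp
  next
    assume jj: "j = 4"
    have "y 4 = 0"
    proof (rule AL2b)
      show "x 4 * (x 0 - x 1 + x 2 - x 3) = 0" using h4 by (simp only: Bv_simps)
      show "x 0 * (x 1 - x 2 + x 3 - x 4) = 0" using h0 by (simp only: Bv_simps)
      show "x 1 * (x 2 - x 3 + x 4 - x 0) = 0" using h1 by (simp only: Bv_simps)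
      show "x 2 * (x 3 - x 4 + x 0 - x 1) = 0" using h2 by (simp only: Bv_simps)
      show "x 3 * (x 4 - x 0 + x 1 - x 2) = 0" using h3 by (simp only: Bv_simps)
      show "x 4 + x 0 + x 1 + x 2 + x 3 = 1" using s' by (simp add: algebra_simps)
      show "y 4 * (x 0 - x 1 + x 2 - x 3) + x 4 * (y 0 - y 1 + y 2 - y 3) = 0" using g4 by (simp only: Bv_simps)
      show "y 0 * (x 1 - x 2 + x 3 - x 4) + x 0 * (y 1 - y 2 + y 3 - y 4) = 0" using g0 by (simp only: Bv_simps)
      show "y 1 * (x 2 - x 3 + x 4 - x 0) + x 1 * (y 2 - y 3 + y 4 - y 0) = 0" using g1 by (simp only: Bv_simps)
      show "y 2 * (x 3 - x 4 + x 0 - x 1) + x 2 * (y 3 - y 4 + y 0 - y 1) = 0" using g2 by (simp only: Bv_simps)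
      show "y 3 * (x 4 - x 0 + x 1 - x 2) + x 3 * (y 4 - y 0 + y 1 - y 2) = 0" using g3 by (simp only: Bv_simps)
      show "y 4 + y 0 + y 1 + y 2 + y 3 = 0" using sy' by (simp add: algebra_simps)
    qed
    thus ?thesis using jj by simp
  qed
qed


lemma fls_times_low:
  fixes F G :: "complex fls"
  assumes F: "\<forall>n<p. F $$ n = 0" and G: "\<forall>n<q. G $$ n = 0"
  shows "(F*G) $$ (p+q) = F $$ p * G $$ q"
proof (cases "F = 0 \<or> G = 0")
  case True thus ?thesis by auto
next
  case False
  hence F0: "F \<noteq> 0" and G0: "G \<noteq> 0" by auto
  define df where "df = fls_subdegree F"
  define dg where "dg = fls_subdegree G"
  have dfp: "p \<le> df" unfolding df_def using F0 F by (intro fls_subdegree_geI) auto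
  have dgq: "q \<le> dg" unfolding dg_def using G0 G by (intro fls_subdegree_geI) auto
  have "(F*G) $$ (p+q) = (\<Sum>i=df..p+q-dg. F $$ i * G $$ (p+q - i))"
    unfolding df_def dg_def by (rule fls_times_nth(2))
  also have "\<dots> = (\<Sum>i=df..p+q-dg. if i = p then F $$ p * G $$ q else 0)"
  proof (intro sum.cong refl)
    fix i assume "i \<in> {df..p+q-dg}"
    show "F $$ i * G $$ (p+q - i) = (if i = p then F $$ p * G $$ q else 0)"
    proof (cases "i < p")
      case True thus ?thesis using F by auto
    next
      case False
      show ?thesis
      proof (cases "i = p")
        case True thus ?thesis by simp
      next
        case False2: False
        with False have "p + q - i < q" by simp
        thus ?thesis using G False2 by auto
      qed
    qed
  qed
  also have "\<dots> = (if p \<in> {df..p+q-dg} then F $$ p * G $$ q else 0)"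
    by (simp only: sum.delta[OF finite_atLeastAtMost_int])
  also have "\<dots> = F $$ p * G $$ q"
  proof (cases "p \<in> {df..p+q-dg}")
    case False
    hence "p < df \<or> q < dg" by auto
    thus ?thesis using False unfolding df_def dg_def by auto
  qed simp
  finally show ?thesis .
qed

lemma fls_times_low0:
  fixes F G :: "complex fls"
  assumes F: "\<forall>n<p. F $$ n = 0" and G: "\<forall>n<q. G $$ n = 0" and n: "n < p + q"
  shows "(F*G) $$ n = 0"
proof (cases "F = 0 \<or> G = 0")
  case True thus ?thesis by auto
next
  case False
  hence F0: "F \<noteq> 0" and G0: "G \<noteq> 0" by auto
  have dfp: "p \<le> fls_subdegree F" using F0 F by (intro fls_subdegree_geI) auto
  have dgq: "q \<le> fls_subdegree G" using G0 G by (intro fls_subdegree_geI) auto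
  show ?thesis using n dfp dgq by (intro fls_times_nth_eq0) simp
qed

lemma Bv_nth: "(Bv F j) $$ n = Bv (\<lambda>k. F k $$ n) j"
  by (simp add: Bv_def)

lemma Bv_low:
  assumes "\<forall>k<5. \<forall>n<s. F k $$ n = 0"
  shows "\<forall>n<s. (Bv F j) $$ n = 0"
  using assms by (simp add: Bv_def)

lemma Bv_diff: "Bv (\<lambda>k. F k - G k) j = Bv F j - Bv G j"
  by (simp add: Bv_def algebra_simps)

lemma exists_min_index:
  fixes H :: "nat \<Rightarrow> complex fls"
  assumes "j0 < 5" "H j0 $$ n0 \<noteq> 0"
  shows "\<exists>s \<le> n0. (\<forall>j<5. \<forall>n<s. H j $$ n = 0) \<and> (\<exists>j<5. H j $$ s \<noteq> 0)"
proof -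
  define A where "A = (\<lambda>j. fls_subdegree (H j)) ` {j::nat. j < 5 \<and> H j \<noteq> 0}"
  have H0: "H j0 \<noteq> 0" using assms by auto
  have fin: "finite A" unfolding A_def by auto
  have ne: "fls_subdegree (H j0) \<in> A" unfolding A_def using assms H0 by auto
  define s where "s = Min A"
  have "s \<le> fls_subdegree (H j0)" unfolding s_def using fin ne by simp
  also have "\<dots> \<le> n0" using assms(2) by (rule fls_subdegree_leI)
  finally have sn: "s \<le> n0" .
  have low: "\<forall>j<5. \<forall>n<s. H j $$ n = 0"
  proof (intro allI impI)
    fix j :: nat and n :: int assume j: "j < 5" and n: "n < s"
    show "H j $$ n = 0"
    proof (cases "H j = 0")
      case False
      hence "s \<le> fls_subdegree (H j)" unfolding s_def A_def using j fin
        by (intro Min_le) (auto simp: A_def)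
      thus ?thesis using n by simp
    qed simp
  qed
  have "s \<in> A" unfolding s_def using fin ne by (intro Min_in) auto
  then obtain j1 where j1: "j1 < 5" "H j1 \<noteq> 0" "s = fls_subdegree (H j1)" unfolding A_def by auto
  hence "H j1 $$ s \<noteq> 0" by simp
  thus ?thesis using sn low j1 by blast
qed

lemma FIN:
  fixes F :: "nat \<Rightarrow> complex fls"
  assumes E: "\<forall>j<5. fls_deriv (F j) = F j * Bv F j + fls_const (\<alpha> j)"
    and S: "(\<Sum>j<5. F j) = fls_const z + fls_X"
  shows "\<forall>j<5. \<forall>n< -1. F j $$ n = 0"
    and "\<forall>j<5. F j $$ (-1) * (1 + Bv (\<lambda>k. F k $$ (-1)) j) = 0"
    and "(\<Sum>j<5. F j $$ (-1)) = 0"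
proof -
  have Sn: "(\<Sum>j<5. F j $$ n) = (fls_const z + fls_X) $$ n" for n
    using arg_cong[OF S, of "\<lambda>G. G $$ n"] by (simp add: fls_nth_sum)
  have En: "of_int (n+1) * F j $$ (n+1) = (F j * Bv F j) $$ n + (if n = 0 then \<alpha> j else 0)"
    if "j < 5" for j n
    using arg_cong[OF E[rule_format, OF that], of "\<lambda>G. G $$ n"] by simp
  show low: "\<forall>j<5. \<forall>n< -1. F j $$ n = 0"
  proof (rule ccontr)
    assume "\<not> ?thesis"
    then obtain j0 n0 where j0: "j0 < 5" "n0 < -1" "F j0 $$ n0 \<noteq> 0" by auto
    from exists_min_index[of j0 F n0, OF j0(1) j0(3)] obtain s where
      s: "s \<le> n0" "\<forall>j<5. \<forall>n<s. F j $$ n = 0" "\<exists>j<5. F j $$ s \<noteq> 0" by blast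
    have sl: "s < -1" using s(1) j0(2) by simp
    define R where "R = (\<lambda>k. F k $$ s)"
    have RB: "\<forall>j<5. R j * Bv R j = 0"
    proof (intro allI impI)
      fix j :: nat assume j: "j < 5"
      have "of_int (s+s+1) * F j $$ (s+s+1) = (F j * Bv F j) $$ (s+s) + (if s+s = 0 then \<alpha> j else 0)"
        using En[OF j] .
      moreover have "F j $$ (s+s+1) = 0" using s(2) j sl by simp
      moreover have "(F j * Bv F j) $$ (s+s) = F j $$ s * (Bv F j) $$ s"
        by (rule fls_times_low) (use s(2) j Bv_low[OF s(2)] in auto)
      ultimately show "R j * Bv R j = 0" using sl by (simp add: R_def Bv_nth)
    qed
    have RS: "(\<Sum>j<5. R j) = 0" using Sn[of s] sl unfolding R_def by simp
    have "\<forall>j<5. R j = 0" using AL1v[OF RB RS] by blast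
    thus False using s(3) unfolding R_def by blast
  qed
  define r where "r = (\<lambda>k. F k $$ (-1))"
  show "\<forall>j<5. F j $$ (-1) * (1 + Bv (\<lambda>k. F k $$ (-1)) j) = 0"
  proof (intro allI impI)
    fix j :: nat assume j: "j < 5"
    have "of_int (-2+1) * F j $$ (-2+1) = (F j * Bv F j) $$ (-2) + (if (-2::int) = 0 then \<alpha> j else 0)"
      using En[OF j] .
    moreover have "(F j * Bv F j) $$ (-1 + -1) = F j $$ (-1) * (Bv F j) $$ (-1)"
      by (rule fls_times_low) (use low j Bv_low[OF low] in auto)
    ultimately have "- (F j $$ (-1)) = F j $$ (-1) * Bv (\<lambda>k. F k $$ (-1)) j"
      by (simp add: Bv_nth)
    thus "F j $$ (-1) * (1 + Bv (\<lambda>k. F k $$ (-1)) j) = 0"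
      by (simp add: distrib_left neg_eq_iff_add_eq_0)
  qed
  show "(\<Sum>j<5. F j $$ (-1)) = 0" using Sn[of "-1"] by simp
qed

text \<open>Local analysis at infinity (in the variable w = 1/t).\<close>
lemma INF:
  fixes G :: "nat \<Rightarrow> complex fls"
  assumes E: "\<forall>j<5. fls_deriv (G j) = - fls_shift 2 (G j * Bv G j + fls_const (\<alpha> j))"
    and S: "(\<Sum>j<5. G j) = fls_X_inv"
  shows "\<forall>j<5. \<forall>n< -1. G j $$ n = 0"
    and "\<forall>j<5. G j $$ (-1) * Bv (\<lambda>k. G k $$ (-1)) j = 0"
    and "(\<Sum>j<5. G j $$ (-1)) = 1"
proof -
  have Sn: "(\<Sum>j<5. G j $$ n) = fls_X_inv $$ n" for n
    using arg_cong[OF S, of "\<lambda>H. H $$ n"] by (simp add: fls_nth_sum)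
  have En: "of_int (n+1) * G j $$ (n+1) = - ((G j * Bv G j) $$ (n+2) + (if n+2 = 0 then \<alpha> j else 0))"
    if "j < 5" for j n
    using arg_cong[OF E[rule_format, OF that], of "\<lambda>H. H $$ n"] by simp
  show low: "\<forall>j<5. \<forall>n< -1. G j $$ n = 0"
  proof (rule ccontr)
    assume "\<not> ?thesis"
    then obtain j0 n0 where j0: "j0 < 5" "n0 < -1" "G j0 $$ n0 \<noteq> 0" by auto
    from exists_min_index[of j0 G n0, OF j0(1) j0(3)] obtain s where
      s: "s \<le> n0" "\<forall>j<5. \<forall>n<s. G j $$ n = 0" "\<exists>j<5. G j $$ s \<noteq> 0" by blast
    have sl: "s < -1" using s(1) j0(2) by simp
    define R where "R = (\<lambda>k. G k $$ s)"
    have RB: "\<forall>j<5. R j * Bv R j = 0"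
    proof (intro allI impI)
      fix j :: nat assume j: "j < 5"
      have "of_int ((s+s-2)+1) * G j $$ ((s+s-2)+1) = - ((G j * Bv G j) $$ ((s+s-2)+2) + (if (s+s-2)+2 = 0 then \<alpha> j else 0))"
        using En[OF j] .
      moreover have "G j $$ ((s+s-2)+1) = 0" using s(2) j sl by simp
      moreover have "(G j * Bv G j) $$ (s+s) = G j $$ s * (Bv G j) $$ s"
        by (rule fls_times_low) (use s(2) j Bv_low[OF s(2)] in auto)
      ultimately show "R j * Bv R j = 0" using sl by (simp add: R_def Bv_nth)
    qed
    have RS: "(\<Sum>j<5. R j) = 0" using Sn[of s] sl unfolding R_def by simp
    have "\<forall>j<5. R j = 0" using AL1v[OF RB RS] by blast
    thus False using s(3) unfolding R_def by blast
  qed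
  show "\<forall>j<5. G j $$ (-1) * Bv (\<lambda>k. G k $$ (-1)) j = 0"
  proof (intro allI impI)
    fix j :: nat assume j: "j < 5"
    have "of_int (-4+1) * G j $$ (-4+1) = - ((G j * Bv G j) $$ (-4+2) + (if (-4::int)+2 = 0 then \<alpha> j else 0))"
      using En[OF j] .
    moreover have "G j $$ (-4+1) = 0" using low j by simp
    moreover have "(G j * Bv G j) $$ (-1 + -1) = G j $$ (-1) * (Bv G j) $$ (-1)"
      by (rule fls_times_low) (use low j Bv_low[OF low] in auto)
    ultimately show "G j $$ (-1) * Bv (\<lambda>k. G k $$ (-1)) j = 0"
      by (simp add: Bv_nth)
  qed
  show "(\<Sum>j<5. G j $$ (-1)) = 1" using Sn[of "-1"] by simp
qed

lemma UNIQ: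
  fixes G H :: "nat \<Rightarrow> complex fls"
  assumes EG: "\<forall>j<5. fls_deriv (G j) = - fls_shift 2 (G j * Bv G j + fls_const (\<alpha> j))"
    and SG: "(\<Sum>j<5. G j) = fls_X_inv"
  assumes EH: "\<forall>j<5. fls_deriv (H j) = - fls_shift 2 (H j * Bv H j + fls_const (\<alpha> j))"
    and SH: "(\<Sum>j<5. H j) = fls_X_inv"
    and lead: "\<forall>j<5. G j $$ (-1) = H j $$ (-1)"
  shows "\<forall>j<5. G j = H j"
proof (rule ccontr)
  assume "\<not> ?thesis"
  then obtain j0 where j0: "j0 < 5" "G j0 \<noteq> H j0" by auto
  define K where "K = (\<lambda>k. G k - H k)"
  from j0 obtain n0 where n0: "K j0 $$ n0 \<noteq> 0" unfolding K_def by (auto simp: fls_eq_iff)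
  from exists_min_index[of j0 K n0, OF j0(1) n0] obtain s where
    s: "\<forall>j<5. \<forall>n<s. K j $$ n = 0" "\<exists>j<5. K j $$ s \<noteq> 0" by blast
  note lG = INF[OF EG SG] and lH = INF[OF EH SH]
  define a where "a = (\<lambda>k. G k $$ (-1))"
  have Klow: "K j $$ n = 0" if "j < 5" "n \<le> -1" for j n
  proof (cases "n = -1")
    case True thus ?thesis using lead that unfolding K_def by simp
  next
    case False thus ?thesis using lG(1) lH(1) that unfolding K_def by simp
  qed
  have s0: "0 \<le> s"
  proof (rule ccontr)
    assume "\<not> 0 \<le> s"
    thus False using s(2) Klow by force
  qed
  define C where "C = (\<lambda>k. K k $$ s)"
  have Gl: "\<forall>k<5. \<forall>n< -1. G k $$ n = 0" using lG(1) .
  have Hl: "\<forall>k<5. \<forall>n< -1. H k $$ n = 0" using lH(1) .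
  have CB: "\<forall>j<5. C j * Bv a j + a j * Bv C j = 0"
  proof (intro allI impI)
    fix j :: nat assume j: "j < 5"
    have EK: "fls_deriv (K j) = - fls_shift 2 (K j * Bv G j + H j * Bv K j)"
    proof -
      have "fls_deriv (K j) = fls_deriv (G j) - fls_deriv (H j)" unfolding K_def by simp
      also have "\<dots> = - fls_shift 2 (G j * Bv G j + fls_const (\<alpha> j))
                      + fls_shift 2 (H j * Bv H j + fls_const (\<alpha> j))" using EG EH j by simp
      also have "\<dots> = - fls_shift 2 (K j * Bv G j + H j * Bv K j)"
        unfolding K_def Bv_diff by (simp add: fls_eq_iff algebra_simps)
      finally show ?thesis .
    qed
    have "of_int ((s-3)+1) * K j $$ ((s-3)+1) = - ((K j * Bv G j) $$ ((s-3)+2) + (H j * Bv K j) $$ ((s-3)+2))"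
      using arg_cong[OF EK, of "\<lambda>X. X $$ (s-3)"] by simp
    moreover have "K j $$ ((s-3)+1) = 0" using s(1) j by simp
    moreover have "(K j * Bv G j) $$ (s + -1) = K j $$ s * (Bv G j) $$ (-1)"
      by (rule fls_times_low) (use s(1) j Bv_low[OF Gl] in auto)
    moreover have "(H j * Bv K j) $$ (-1 + s) = H j $$ (-1) * (Bv K j) $$ s"
      by (rule fls_times_low) (use Hl j Bv_low[OF s(1)] in auto)
    moreover have "H j $$ (-1) = a j" using lead j unfolding a_def by simp
    ultimately show "C j * Bv a j + a j * Bv C j = 0"
      by (simp add: C_def a_def Bv_nth algebra_simps)
  qed
  have CS: "(\<Sum>j<5. C j) = 0"
  proof -
    have "(\<Sum>j<5. K j) = 0" unfolding K_def using SG SH by (simp add: sum_subtractf)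
    hence "(\<Sum>j<5. K j) $$ s = 0" by simp
    thus ?thesis unfolding C_def by (simp add: fls_nth_sum)
  qed
  have "\<forall>j<5. C j = 0"
    using AL2bv[of a C] lG(2) lG(3) CB CS unfolding a_def by blast
  thus False using s(2) unfolding C_def by blast
qed


lemma poly_analytic: "(\<lambda>z. poly p z) analytic_on A"
proof -
  have "(\<lambda>z. poly p z) holomorphic_on UNIV" by (intro holomorphic_intros)
  hence "(\<lambda>z. poly p z) analytic_on UNIV" by (simp add: analytic_on_open)
  thus ?thesis by (rule analytic_on_subset) auto
qed

lemma rat_mero: "(\<lambda>t. poly p t / poly q t) meromorphic_on A"
  by (intro meromorphic_intros analytic_on_imp_meromorphic_on poly_analytic)

lemma poly_inv_mero: "(\<lambda>w. poly p (1/w)) meromorphic_on A"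
proof -
  have "(\<lambda>w. (\<Sum>i\<le>degree p. coeff p i * (1/w) ^ i)) meromorphic_on A"
    by (intro meromorphic_intros)
  thus ?thesis by (simp add: poly_altdef)
qed

lemma rat_inf_mero: "(\<lambda>w. poly p (1/w) / poly q (1/w)) meromorphic_on A"
  by (intro meromorphic_intros poly_inv_mero)

lemma ev_avoid:
  fixes S :: "complex set"
  assumes "finite S"
  shows "eventually (\<lambda>w. w \<notin> S) (at z)"
proof -
  have "finite (S - {z})" using assms by simp
  hence "closed (S - {z})" by (rule finite_imp_closed)
  hence "open (- (S - {z}))" by (rule open_Compl)
  hence "eventually (\<lambda>w. w \<in> - (S - {z})) (nhds z)" by (intro eventually_nhds_in_open) auto
  thus ?thesis by (auto simp: eventually_at_filter elim: eventually_mono)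
qed

lemma sol_polys:
  assumes "A4_rational_solution \<alpha> f"
  obtains P Q where "\<forall>j<5. Q j \<noteq> 0 \<and> f j = (\<lambda>t. poly (P j) t / poly (Q j) t)"
proof -
  from assms have h: "\<forall>j<5. \<exists>p q. q \<noteq> 0 \<and> f j = (\<lambda>t. poly p t / poly q t)"
    by (simp add: A4_rational_solution_def rat_fun_def)
  have "\<forall>j. \<exists>p. j < 5 \<longrightarrow> (\<exists>q. q \<noteq> 0 \<and> f j = (\<lambda>t. poly p t / poly q t))"
    using h by blast
  from choice[OF this] obtain P where P: "\<forall>j. j < 5 \<longrightarrow> (\<exists>q. q \<noteq> 0 \<and> f j = (\<lambda>t. poly (P j) t / poly q t))"
    by blast
  have "\<forall>j. \<exists>q. j < 5 \<longrightarrow> (q \<noteq> 0 \<and> f j = (\<lambda>t. poly (P j) t / poly q t))"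
    using P by blast
  from choice[OF this] obtain Q where Q: "\<forall>j. j < 5 \<longrightarrow> (Q j \<noteq> 0 \<and> f j = (\<lambda>t. poly (P j) t / poly (Q j) t))"
    by blast
  show ?thesis using that[of Q P] Q by blast
qed

lemma sol_mero: "A4_rational_solution \<alpha> f \<Longrightarrow> j < 5 \<Longrightarrow> f j meromorphic_on A"
proof -
  assume s: "A4_rational_solution \<alpha> f" and "j < 5"
  from s obtain P Q where "\<forall>j<5. Q j \<noteq> 0 \<and> f j = (\<lambda>t. poly (P j) t / poly (Q j) t)" by (rule sol_polys)
  hence "f j = (\<lambda>t. poly (P j) t / poly (Q j) t)" using \<open>j < 5\<close> by blast
  thus ?thesis by (simp add: rat_mero)
qed

lemma sol_mero_inf: "A4_rational_solution \<alpha> f \<Longrightarrow> j < 5 \<Longrightarrow> (\<lambda>w. f j (1/w)) meromorphic_on A"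
proof -
  assume s: "A4_rational_solution \<alpha> f" and "j < 5"
  from s obtain P Q where "\<forall>j<5. Q j \<noteq> 0 \<and> f j = (\<lambda>t. poly (P j) t / poly (Q j) t)" by (rule sol_polys)
  hence "f j = (\<lambda>t. poly (P j) t / poly (Q j) t)" using \<open>j < 5\<close> by blast
  thus ?thesis by (simp add: rat_inf_mero)
qed

definition ODEpt :: "(nat \<Rightarrow> complex) \<Rightarrow> (nat \<Rightarrow> complex \<Rightarrow> complex) \<Rightarrow> complex \<Rightarrow> bool" where
  "ODEpt \<alpha> f t \<longleftrightarrow> (\<forall>j<5. (f j has_field_derivative (f j t * Bv (\<lambda>k. f k t) j + \<alpha> j)) (at t))
        \<and> (\<Sum>j<5. f j t) = t"

lemma sol_bad:
  assumes "A4_rational_solution \<alpha> f"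
  shows "finite {t. \<not> ODEpt \<alpha> f t}"
proof -
  have "eventually (ODEpt \<alpha> f) cofinite"
    using assms unfolding A4_rational_solution_def ODEpt_def Bv_def by simp
  thus ?thesis by (simp add: eventually_cofinite)
qed

definition LF :: "(nat \<Rightarrow> complex \<Rightarrow> complex) \<Rightarrow> complex \<Rightarrow> nat \<Rightarrow> complex fls" where
  "LF f z j = laurent_expansion (f j) z"

definition LI :: "(nat \<Rightarrow> complex \<Rightarrow> complex) \<Rightarrow> nat \<Rightarrow> complex fls" where
  "LI f j = laurent_expansion (\<lambda>w. f j (1/w)) 0"

lemma LF_exp: "A4_rational_solution \<alpha> f \<Longrightarrow> j < 5 \<Longrightarrow> (\<lambda>w. f j (z + w)) has_laurent_expansion LF f z j"
  unfolding LF_def by (rule meromorphic_on_imp_has_laurent_expansion[OF sol_mero]) auto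

lemma LI_exp: "A4_rational_solution \<alpha> f \<Longrightarrow> j < 5 \<Longrightarrow> (\<lambda>w. f j (1/w)) has_laurent_expansion LI f j"
proof -
  assume s: "A4_rational_solution \<alpha> f" and j: "j < 5"
  have "(\<lambda>w. f j (1/w)) meromorphic_on UNIV" by (rule sol_mero_inf[OF s j])
  from meromorphic_on_imp_has_laurent_expansion[OF this, of 0] show ?thesis unfolding LI_def by simp
qed

lemma RHS_exp:
  assumes "\<forall>k<5. h k has_laurent_expansion F k" "j < 5"
  shows "(\<lambda>w. h j w * Bv (\<lambda>k. h k w) j + c) has_laurent_expansion (F j * Bv F j + fls_const c)"
  unfolding Bv_def using assms by (intro laurent_expansion_intros) auto

lemma ev_shift: "finite (S::complex set) \<Longrightarrow> eventually (\<lambda>w. z + w \<notin> S) (at 0)"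
proof -
  assume "finite S"
  hence "finite ((\<lambda>t. t - z) ` S)" by simp
  from ev_avoid[OF this, of 0] show ?thesis by (elim eventually_mono) force
qed

lemma ev_inv: "finite S \<Longrightarrow> eventually (\<lambda>w. w \<noteq> 0 \<and> 1/w \<notin> S) (at (0::complex))"
proof -
  assume "finite S"
  hence "finite ((\<lambda>t. 1/t) ` S)" by simp
  from ev_avoid[OF this, of 0] have "eventually (\<lambda>w. w \<notin> (\<lambda>t. 1/t) ` S) (at (0::complex))" .
  moreover have "eventually (\<lambda>w. w \<noteq> (0::complex)) (at 0)" by (simp add: eventually_at_filter)
  ultimately show ?thesis proof eventually_elim
    case (elim w)
    show ?case
    proof
      show "w \<noteq> 0" using elim by simp
      show "1/w \<notin> S"
      proof
        assume "1/w \<in> S"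
        hence "1/(1/w) \<in> (\<lambda>t. 1/t) ` S" by (rule imageI)
        thus False using elim by simp
      qed
    qed
  qed
qed

lemma E_fin:
  assumes sol: "A4_rational_solution \<alpha> f"
  shows "\<forall>j<5. fls_deriv (LF f z j) = LF f z j * Bv (LF f z) j + fls_const (\<alpha> j)"
proof (intro allI impI)
  fix j :: nat assume j: "j < 5"
  have ev: "eventually (\<lambda>w. z + w \<notin> {t. \<not> ODEpt \<alpha> f t}) (at 0)"
    by (rule ev_shift[OF sol_bad[OF sol]])
  have ev2: "eventually (\<lambda>w. deriv (\<lambda>w. f j (z+w)) w = f j (z+w) * Bv (\<lambda>k. f k (z+w)) j + \<alpha> j) (at 0)"
    using ev
  proof eventually_elim
    case (elim w)
    hence "(f j has_field_derivative (f j (z+w) * Bv (\<lambda>k. f k (z+w)) j + \<alpha> j)) (at (w + z))"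
      using j by (auto simp: ODEpt_def add.commute)
    hence "((\<lambda>x. f j (x + z)) has_field_derivative (f j (z+w) * Bv (\<lambda>k. f k (z+w)) j + \<alpha> j)) (at w)"
      by (simp add: DERIV_shift)
    thus ?case by (simp add: add.commute DERIV_imp_deriv)
  qed
  have 1: "deriv (\<lambda>w. f j (z+w)) has_laurent_expansion fls_deriv (LF f z j)"
    by (intro has_laurent_expansion_deriv LF_exp[OF sol j])
  have 2: "(\<lambda>w. f j (z+w) * Bv (\<lambda>k. f k (z+w)) j + \<alpha> j) has_laurent_expansion (LF f z j * Bv (LF f z) j + fls_const (\<alpha> j))"
    by (rule RHS_exp) (use LF_exp[OF sol] j in auto)
  have "(\<lambda>w. f j (z+w) * Bv (\<lambda>k. f k (z+w)) j + \<alpha> j) has_laurent_expansion fls_deriv (LF f z j)"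
    using 1 by (subst (asm) has_laurent_expansion_cong[OF ev2 refl])
  thus "fls_deriv (LF f z j) = LF f z j * Bv (LF f z) j + fls_const (\<alpha> j)"
    using 2 by (rule has_laurent_expansion_unique)
qed

lemma S_fin:
  assumes sol: "A4_rational_solution \<alpha> f"
  shows "(\<Sum>j<5. LF f z j) = fls_const z + fls_X"
proof -
  have ev: "eventually (\<lambda>w. z + w \<notin> {t. \<not> ODEpt \<alpha> f t}) (at 0)"
    by (rule ev_shift[OF sol_bad[OF sol]])
  hence ev2: "eventually (\<lambda>w. (\<Sum>j<5. f j (z+w)) = z + w) (at 0)"
    by eventually_elim (auto simp: ODEpt_def)
  have 1: "(\<lambda>w. \<Sum>j<5. f j (z+w)) has_laurent_expansion (\<Sum>j<5. LF f z j)"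
    by (intro has_laurent_expansion_sum LF_exp[OF sol]) auto
  have 2: "(\<lambda>w. z + w) has_laurent_expansion fls_const z + fls_X"
    by (intro laurent_expansion_intros)
  have "(\<lambda>w. z + w) has_laurent_expansion (\<Sum>j<5. LF f z j)"
    using 1 by (subst (asm) has_laurent_expansion_cong[OF ev2 refl])
  thus ?thesis using 2 by (rule has_laurent_expansion_unique)
qed

lemma E_inf:
  assumes sol: "A4_rational_solution \<alpha> f"
  shows "\<forall>j<5. fls_deriv (LI f j) = - fls_shift 2 (LI f j * Bv (LI f) j + fls_const (\<alpha> j))"
proof (intro allI impI)
  fix j :: nat assume j: "j < 5"
  have ev: "eventually (\<lambda>w. w \<noteq> 0 \<and> 1/w \<notin> {t. \<not> ODEpt \<alpha> f t}) (at 0)"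
    by (rule ev_inv[OF sol_bad[OF sol]])
  have ev2: "eventually (\<lambda>w. deriv (\<lambda>w. f j (1/w)) w =
      - ((f j (1/w) * Bv (\<lambda>k. f k (1/w)) j + \<alpha> j) * w powi (-2))) (at 0)"
    using ev
  proof eventually_elim
    case (elim w)
    hence d1: "(f j has_field_derivative (f j (1/w) * Bv (\<lambda>k. f k (1/w)) j + \<alpha> j)) (at (inverse w))"
      using j by (auto simp: ODEpt_def inverse_eq_divide)
    have d2: "((\<lambda>x. inverse x) has_field_derivative - (inverse w ^ Suc (Suc 0))) (at w)"
      using elim by (intro DERIV_inverse) auto
    have "((\<lambda>x. f j (inverse x)) has_field_derivative
        (f j (1/w) * Bv (\<lambda>k. f k (1/w)) j + \<alpha> j) * - (inverse w ^ Suc (Suc 0))) (at w)"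
      by (rule DERIV_chain2[OF d1 d2])
    hence "((\<lambda>x. f j (1/x)) has_field_derivative
        - ((f j (1/w) * Bv (\<lambda>k. f k (1/w)) j + \<alpha> j) * w powi (-2))) (at w)"
      by (simp add: inverse_eq_divide power_int_minus power2_eq_square)
    thus ?case by (rule DERIV_imp_deriv)
  qed
  have 1: "deriv (\<lambda>w. f j (1/w)) has_laurent_expansion fls_deriv (LI f j)"
    by (intro has_laurent_expansion_deriv LI_exp[OF sol j])
  have 2: "(\<lambda>w. f j (1/w) * Bv (\<lambda>k. f k (1/w)) j + \<alpha> j) has_laurent_expansion (LI f j * Bv (LI f) j + fls_const (\<alpha> j))"
    by (rule RHS_exp) (use LI_exp[OF sol] j in auto)
  have 3: "(\<lambda>w. - ((f j (1/w) * Bv (\<lambda>k. f k (1/w)) j + \<alpha> j) * w powi (-2))) has_laurent_expansion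
      - fls_shift 2 (LI f j * Bv (LI f) j + fls_const (\<alpha> j))"
    by (intro has_laurent_expansion_minus has_laurent_expansion_shift' 2)
  have "(\<lambda>w. - ((f j (1/w) * Bv (\<lambda>k. f k (1/w)) j + \<alpha> j) * w powi (-2))) has_laurent_expansion fls_deriv (LI f j)"
    using 1 by (subst (asm) has_laurent_expansion_cong[OF ev2 refl])
  thus "fls_deriv (LI f j) = - fls_shift 2 (LI f j * Bv (LI f) j + fls_const (\<alpha> j))"
    using 3 by (rule has_laurent_expansion_unique)
qed

lemma S_inf:
  assumes sol: "A4_rational_solution \<alpha> f"
  shows "(\<Sum>j<5. LI f j) = fls_X_inv"
proof -
  have ev: "eventually (\<lambda>w. w \<noteq> 0 \<and> 1/w \<notin> {t. \<not> ODEpt \<alpha> f t}) (at 0)"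
    by (rule ev_inv[OF sol_bad[OF sol]])
  hence ev2: "eventually (\<lambda>w. (\<Sum>j<5. f j (1/w)) = inverse w) (at 0)"
    by eventually_elim (auto simp: ODEpt_def inverse_eq_divide)
  have 1: "(\<lambda>w. \<Sum>j<5. f j (1/w)) has_laurent_expansion (\<Sum>j<5. LI f j)"
    by (intro has_laurent_expansion_sum LI_exp[OF sol]) auto
  have 2: "inverse has_laurent_expansion fls_X_inv"
    by (intro laurent_expansion_intros)
  have "inverse has_laurent_expansion (\<Sum>j<5. LI f j)"
    using 1 by (subst (asm) has_laurent_expansion_cong[OF ev2 refl])
  thus ?thesis using 2 by (rule has_laurent_expansion_unique)
qed


lemma A4_iff: "A4_rational_solution \<alpha> f \<longleftrightarrow> (\<forall>j<5. rat_fun (f j)) \<and> finite {t. \<not> ODEpt \<alpha> f t}"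
  unfolding A4_rational_solution_def ODEpt_def Bv_def eventually_cofinite by simp

lemma Bv_uminus: "Bv (\<lambda>k. - x k) j = - Bv x j"
  by (simp add: Bv_def)

lemma neg_rat_fun:
  assumes "rat_fun h"
  shows "rat_fun (\<lambda>t. - h (-t))"
proof -
  from assms obtain p q where pq: "q \<noteq> 0" "h = (\<lambda>t. poly p t / poly q t)"
    unfolding rat_fun_def by blast
  define p' where "p' = - pcompose p [:0, -1:]"
  define q' where "q' = pcompose q [:0, -1:]"
  have "q' \<noteq> 0"
  proof
    assume "q' = 0"
    hence "q = 0" unfolding q'_def by (rule pcompose_eq_0) simp
    thus False using pq by simp
  qed
  moreover have "(\<lambda>t. - h (-t)) = (\<lambda>t. poly p' t / poly q' t)"
    unfolding p'_def q'_def pq(2) by (simp add: poly_pcompose)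
  ultimately show ?thesis unfolding rat_fun_def by blast
qed

definition negf :: "(nat \<Rightarrow> complex \<Rightarrow> complex) \<Rightarrow> nat \<Rightarrow> complex \<Rightarrow> complex" where
  "negf f j t = - f j (-t)"

lemma ODEpt_neg:
  assumes "ODEpt \<alpha> f (-t)"
  shows "ODEpt \<alpha> (negf f) t"
  unfolding ODEpt_def
proof (intro conjI allI impI)
  fix j :: nat assume j: "j < 5"
  have d1: "(f j has_field_derivative (f j (-t) * Bv (\<lambda>k. f k (-t)) j + \<alpha> j)) (at (-t))"
    using assms j by (simp add: ODEpt_def)
  have d2: "((\<lambda>x. - x) has_field_derivative -1) (at t)"
    by (auto intro!: derivative_eq_intros)
  have "((\<lambda>x. f j (- x)) has_field_derivative (f j (-t) * Bv (\<lambda>k. f k (-t)) j + \<alpha> j) * -1) (at t)"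
    by (rule DERIV_chain2[OF d1 d2])
  hence "((\<lambda>x. - f j (- x)) has_field_derivative - ((f j (-t) * Bv (\<lambda>k. f k (-t)) j + \<alpha> j) * -1)) (at t)"
    by (rule DERIV_minus)
  moreover have "- ((f j (-t) * Bv (\<lambda>k. f k (-t)) j + \<alpha> j) * -1) =
       negf f j t * Bv (\<lambda>k. negf f k t) j + \<alpha> j"
    unfolding negf_def Bv_uminus by simp
  ultimately show "(negf f j has_field_derivative negf f j t * Bv (\<lambda>k. negf f k t) j + \<alpha> j) (at t)"
    unfolding negf_def by simp
next
  have "(\<Sum>j<5. f j (-t)) = -t" using assms by (simp add: ODEpt_def)
  thus "(\<Sum>j<5. negf f j t) = t" unfolding negf_def by (simp add: sum_negf)
qed

lemma neg_sol:
  assumes sol: "A4_rational_solution \<alpha> f"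
  shows "A4_rational_solution \<alpha> (negf f)"
  unfolding A4_iff
proof
  show "\<forall>j<5. rat_fun (negf f j)"
    using sol unfolding A4_iff negf_def by (auto intro: neg_rat_fun)
  have fin: "finite {t. \<not> ODEpt \<alpha> f t}" using sol unfolding A4_iff by simp
  have "{t. \<not> ODEpt \<alpha> (negf f) t} \<subseteq> uminus ` {t. \<not> ODEpt \<alpha> f t}"
  proof
    fix t assume "t \<in> {t. \<not> ODEpt \<alpha> (negf f) t}"
    hence "\<not> ODEpt \<alpha> f (-t)" using ODEpt_neg by blast
    hence "-t \<in> {t. \<not> ODEpt \<alpha> f t}" by simp
    hence "- (-t) \<in> uminus ` {t. \<not> ODEpt \<alpha> f t}" by (rule imageI)
    thus "t \<in> uminus ` {t. \<not> ODEpt \<alpha> f t}" by simp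
  qed
  thus "finite {t. \<not> ODEpt \<alpha> (negf f) t}" using fin by (rule finite_subset[OF _ finite_imageI])
qed

lemma neg_X_exp: "(\<lambda>w::complex. - w) has_laurent_expansion fps_to_fls (fps_const (-1) * fps_X)"
proof -
  have "(\<lambda>w::complex. - w) has_laurent_expansion - fls_X"
    by (intro laurent_expansion_intros)
  moreover have "fps_to_fls (fps_const (-1) * fps_X) = (- fls_X :: complex fls)"
    by (simp add: fls_eq_iff) arith
  ultimately show ?thesis by simp
qed

lemma compose_neg_exp:
  assumes "h has_laurent_expansion F"
  shows "(\<lambda>w. h (- w)) has_laurent_expansion fls_compose_fps F (fps_const (-1) * fps_X)"
proof -
  have "(h \<circ> (\<lambda>w. - w)) has_laurent_expansion fls_compose_fps F (fps_const (-1) * fps_X)"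
    by (rule has_laurent_expansion_compose[OF assms neg_X_exp]) (auto simp: fps_eq_iff)
  thus ?thesis by (simp add: o_def)
qed

lemma compose_neg_nth:
  "fls_compose_fps (F :: complex fls) (fps_const (-1) * fps_X) $$ n = F $$ n * (-1) powi n"
  by (rule fls_nth_fls_compose_fps_linear) simp

lemma LI_neg:
  assumes sol: "A4_rational_solution \<alpha> f" and j: "j < 5"
  shows "LI (negf f) j = - fls_compose_fps (LI f j) (fps_const (-1) * fps_X)"
proof -
  have "(\<lambda>w. - f j (1 / (- w))) has_laurent_expansion - fls_compose_fps (LI f j) (fps_const (-1) * fps_X)"
    by (rule has_laurent_expansion_minus[OF compose_neg_exp[OF LI_exp[OF sol j]]])
  moreover have "(\<lambda>w. - f j (1 / (- w))) = (\<lambda>w. negf f j (1/w))"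
    by (simp add: negf_def)
  ultimately have "(\<lambda>w. negf f j (1/w)) has_laurent_expansion - fls_compose_fps (LI f j) (fps_const (-1) * fps_X)"
    by simp
  thus ?thesis using LI_exp[OF neg_sol[OF sol] j] by (rule has_laurent_expansion_unique[symmetric])
qed

lemma LI_odd:
  assumes sol: "A4_rational_solution \<alpha> f"
  shows "\<forall>j<5. LI (negf f) j = LI f j"
proof -
  have sol': "A4_rational_solution \<alpha> (negf f)" by (rule neg_sol[OF sol])
  show ?thesis
  proof (rule UNIQ[OF E_inf[OF sol'] S_inf[OF sol'] E_inf[OF sol] S_inf[OF sol]], intro allI impI)
    fix j :: nat assume j: "j < 5"
    show "LI (negf f) j $$ (-1) = LI f j $$ (-1)"
      unfolding LI_neg[OF sol j] by (simp add: compose_neg_nth)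
  qed
qed

lemma LI_odd_nth:
  assumes sol: "A4_rational_solution \<alpha> f" and j: "j < 5"
  shows "LI f j $$ n = - (LI f j $$ n * (-1) powi n)"
proof -
  have "LI f j $$ n = LI (negf f) j $$ n" using LI_odd[OF sol] j by simp
  also have "\<dots> = - (LI f j $$ n * (-1) powi n)" unfolding LI_neg[OF sol j] by (simp add: compose_neg_nth)
  finally show ?thesis .
qed

lemma LI_0:
  assumes sol: "A4_rational_solution \<alpha> f" and j: "j < 5"
  shows "LI f j $$ 0 = 0"
  using LI_odd_nth[OF sol j, of 0] by simp


lemma ev_odd:
  assumes sol: "A4_rational_solution \<alpha> f" and j: "j < 5"
  shows "eventually (\<lambda>t. f j t = negf f j t) (at c)"
proof -
  define h where "h = (\<lambda>t. f j t - negf f j t)"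
  have sol': "A4_rational_solution \<alpha> (negf f)" by (rule neg_sol[OF sol])
  have mero: "h meromorphic_on UNIV"
    unfolding h_def by (intro meromorphic_intros sol_mero[OF sol j] sol_mero[OF sol' j])
  have e1: "eventually (\<lambda>w. eval_fls (LI f j) w = f j (1/w)) (at 0)"
    using LI_exp[OF sol j] by (simp add: has_laurent_expansion_def)
  have e2: "eventually (\<lambda>w. eval_fls (LI f j) w = negf f j (1/w)) (at 0)"
    using LI_exp[OF sol' j] LI_odd[OF sol] j by (simp add: has_laurent_expansion_def)
  have "eventually (\<lambda>w. h (1/w) = 0) (at (0::complex))"
    using e1 e2 by eventually_elim (simp add: h_def)
  then obtain r where r: "r > 0" "\<And>w. w \<noteq> 0 \<Longrightarrow> dist w 0 < r \<Longrightarrow> h (1/w) = 0"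
    unfolding eventually_at by auto
  define z0 :: complex where "z0 = of_real (2/r)"
  have "eventually (\<lambda>t. h t = 0) (at z0)"
    unfolding eventually_at
  proof (intro exI[of _ "1/r"] conjI ballI impI)
    show "0 < 1/r" using r by simp
    fix t :: complex assume "t \<in> UNIV" and t: "t \<noteq> z0 \<and> dist t z0 < 1/r"
    have nz0: "norm z0 = 2/r" unfolding z0_def using r by (simp add: norm_divide)
    have "norm z0 \<le> norm t + dist t z0"
      by (metis dist_commute dist_norm norm_triangle_sub add.commute)
    hence tn: "norm t > 1/r" using t nz0 by simp
    hence t0: "t \<noteq> 0" using r by auto
    have "dist (1/t) 0 < r"
      using tn r t0 by (simp add: norm_divide field_simps)
    hence "h (1/(1/t)) = 0" using r(2)[of "1/t"] t0 by simp
    thus "h t = 0" by simp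
  qed
  hence freq: "frequently (\<lambda>t. h t = 0) (at z0)"
    by (intro eventually_frequently) auto
  have "eventually (\<lambda>t. h t = 0) (cosparse UNIV)"
  proof -
    from meromorphic_imp_constant_or_avoid[OF mero, of 0]
    have "eventually (\<lambda>t. h t = 0) (cosparse UNIV) \<or> eventually (\<lambda>t. h t \<noteq> 0) (cosparse UNIV)"
      by (simp add: connected_UNIV)
    moreover have "\<not> eventually (\<lambda>t. h t \<noteq> 0) (cosparse UNIV)"
    proof
      assume "eventually (\<lambda>t. h t \<noteq> 0) (cosparse UNIV)"
      hence "eventually (\<lambda>t. h t \<noteq> 0) (at z0)" by (simp add: eventually_cosparse_open_eq)
      thus False using freq by (simp add: frequently_def)
    qed
    ultimately show ?thesis by blast
  qed
  hence "eventually (\<lambda>t. h t = 0) (at c)" by (simp add: eventually_cosparse_open_eq)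
  thus ?thesis by eventually_elim (simp add: h_def)
qed

lemma LF_neg:
  assumes sol: "A4_rational_solution \<alpha> f" and j: "j < 5"
  shows "LF f c j = - fls_compose_fps (LF f (-c) j) (fps_const (-1) * fps_X)"
proof -
  have 1: "(\<lambda>w. - f j (-c + - w)) has_laurent_expansion - fls_compose_fps (LF f (-c) j) (fps_const (-1) * fps_X)"
    by (rule has_laurent_expansion_minus[OF compose_neg_exp[OF LF_exp[OF sol j]]])
  have "(\<lambda>w. f j (c + w)) has_laurent_expansion LF f c j" by (rule LF_exp[OF sol j])
  also have "?this \<longleftrightarrow> (\<lambda>w. negf f j (c + w)) has_laurent_expansion LF f c j"
    by (rule has_laurent_expansion_cong'[OF ev_odd[OF sol j] refl refl])
  finally have "(\<lambda>w. - f j (-c + - w)) has_laurent_expansion LF f c j"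
    by (simp add: negf_def add.commute)
  thus ?thesis using 1 by (rule has_laurent_expansion_unique)
qed

lemma fin_low:
  assumes sol: "A4_rational_solution \<alpha> f"
  shows "\<forall>j<5. \<forall>n< -1. LF f z j $$ n = 0"
  by (rule FIN(1)[OF E_fin[OF sol] S_fin[OF sol]])

lemma sub_neg_iff:
  fixes F :: "complex fls"
  assumes "\<forall>n< -1. F $$ n = 0"
  shows "fls_subdegree F < 0 \<longleftrightarrow> F $$ (-1) \<noteq> 0"
proof
  assume "fls_subdegree F < 0"
  hence "F \<noteq> 0" by auto
  hence "F $$ fls_subdegree F \<noteq> 0" by simp
  hence "\<not> fls_subdegree F < -1" using assms by auto
  with \<open>fls_subdegree F < 0\<close> have "fls_subdegree F = -1" by simp
  thus "F $$ (-1) \<noteq> 0" using \<open>F $$ fls_subdegree F \<noteq> 0\<close> by simp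
next
  assume "F $$ (-1) \<noteq> 0"
  hence "fls_subdegree F \<le> -1" by (rule fls_subdegree_leI)
  thus "fls_subdegree F < 0" by simp
qed

lemma pole_iff:
  assumes sol: "A4_rational_solution \<alpha> f" and i: "i < 5"
  shows "is_pole (f i) c \<longleftrightarrow> LF f c i $$ (-1) \<noteq> 0"
  using is_pole_fls_subdegree_iff[OF LF_exp[OF sol i]] sub_neg_iff fin_low[OF sol] i by blast

lemma residue_LF:
  assumes sol: "A4_rational_solution \<alpha> f" and i: "i < 5"
  shows "residue (f i) c = LF f c i $$ (-1)"
  using has_laurent_expansion_residue[OF LF_exp[OF sol i]] by simp

lemma LF_sym:
  assumes sol: "A4_rational_solution \<alpha> f" and i: "i < 5"
  shows "LF f c i $$ (-1) = LF f (-c) i $$ (-1)"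
  unfolding LF_neg[OF sol i, of c] by (simp add: compose_neg_nth)

lemma part1:
  assumes sol: "A4_rational_solution \<alpha> f" and i: "i < 5"
  shows "(\<forall>c. c \<noteq> 0 \<and> is_pole (f i) c \<longrightarrow>
         is_pole (f i) (- c) \<and> residue (f i) c = residue (f i) (- c))"
  using pole_iff[OF sol i] residue_LF[OF sol i] LF_sym[OF sol i] by metis


lemma term_fin:
  fixes d c z :: complex
  defines "g \<equiv> (\<lambda>t. d / (t - c))"
  shows "(\<lambda>w. g (z + w)) has_laurent_expansion laurent_expansion g z"
    and "\<forall>n<0. laurent_expansion g z $$ n = (if n = -1 \<and> c = z then d else 0)"
proof -
  have "\<exists>T. (\<lambda>w. g (z + w)) has_laurent_expansion T \<and> (\<forall>n<0. T $$ n = (if n = -1 \<and> c = z then d else 0))"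
  proof (cases "c = z")
    case True
    have "(\<lambda>w. d * inverse w) has_laurent_expansion fls_const d * fls_X_inv"
      by (intro laurent_expansion_intros)
    moreover have "(\<lambda>w. g (z + w)) = (\<lambda>w. d * inverse w)"
      unfolding g_def using True by (simp add: divide_inverse)
    ultimately show ?thesis using True by (intro exI[of _ "fls_const d * fls_X_inv"]) auto
  next
    case False
    have "(\<lambda>w. g (z + w)) analytic_on {0}"
      unfolding g_def using False by (intro analytic_intros) auto
    hence "(\<lambda>w. g (z + w)) has_fps_expansion fps_expansion (\<lambda>w. g (z + w)) 0"
      by (rule analytic_at_imp_has_fps_expansion_0)
    hence "(\<lambda>w. g (z + w)) has_laurent_expansion fps_to_fls (fps_expansion (\<lambda>w. g (z + w)) 0)"
      by (rule has_laurent_expansion_fps)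
    thus ?thesis using False by (intro exI) auto
  qed
  then obtain T where T: "(\<lambda>w. g (z + w)) has_laurent_expansion T"
    "\<forall>n<0. T $$ n = (if n = -1 \<and> c = z then d else 0)" by blast
  have "laurent_expansion g z = T" by (rule laurent_expansion_eqI[OF T(1)])
  thus "(\<lambda>w. g (z + w)) has_laurent_expansion laurent_expansion g z"
    and "\<forall>n<0. laurent_expansion g z $$ n = (if n = -1 \<and> c = z then d else 0)" using T by auto
qed

lemma term_inf:
  fixes d c :: complex
  defines "g \<equiv> (\<lambda>w. d / (1/w - c))"
  shows "g has_laurent_expansion laurent_expansion g 0"
    and "\<forall>n\<le>0. laurent_expansion g 0 $$ n = 0"
    and "laurent_expansion g 0 $$ 1 = d"
proof -
  define h where "h = (\<lambda>w. d * w / (1 - c * w))"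
  have ana: "h analytic_on {0}" unfolding h_def by (intro analytic_intros) auto
  hence H: "h has_fps_expansion fps_expansion h 0" by (rule analytic_at_imp_has_fps_expansion_0)
  have ev: "eventually (\<lambda>w. h w = g w) (at 0)"
    unfolding eventually_at_filter
  proof (intro always_eventually allI impI)
    fix w :: complex assume "w \<noteq> 0"
    thus "h w = g w" unfolding h_def g_def
      by (cases "1 - c * w = 0") (auto simp: field_simps)
  qed
  have L: "h has_laurent_expansion fps_to_fls (fps_expansion h 0)"
    by (rule has_laurent_expansion_fps[OF H])
  hence Lg: "g has_laurent_expansion fps_to_fls (fps_expansion h 0)"
    using has_laurent_expansion_cong[OF ev refl] by simp
  have eq: "laurent_expansion g 0 = fps_to_fls (fps_expansion h 0)"
    by (rule laurent_expansion_0_eqI[OF Lg])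
  show "g has_laurent_expansion laurent_expansion g 0" using Lg eq by simp
  have h0: "fps_expansion h 0 $ 0 = 0"
    using has_fps_expansion_imp_0_eq_fps_nth_0[OF H] by (simp add: h_def)
  show "\<forall>n\<le>0. laurent_expansion g 0 $$ n = 0"
    unfolding eq using h0 by auto
  have "(h has_field_derivative d) (at 0)"
  proof -
    have "(h has_field_derivative ((d * (1 - c * 0) - d * 0 * (- c)) / (1 - c * 0)^2)) (at 0)"
      unfolding h_def by (auto intro!: derivative_eq_intros simp: power2_eq_square)
    thus ?thesis by simp
  qed
  hence "deriv h 0 = d" by (rule DERIV_imp_deriv)
  hence "fps_expansion h 0 $ 1 = d"
    using fps_nth_fps_expansion[OF H, of 1] by simp
  thus "laurent_expansion g 0 $$ 1 = d" unfolding eq by simp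
qed

lemma ev_infinity_avoid:
  fixes Z :: "complex set"
  assumes "finite Z"
  shows "eventually (\<lambda>t. t \<notin> Z) at_infinity"
proof -
  define b where "b = Max (insert 0 (norm ` Z)) + 1"
  have "\<forall>z\<in>Z. norm z < b"
  proof
    fix z assume "z \<in> Z"
    hence "norm z \<le> Max (insert 0 (norm ` Z))" using assms by (intro Max_ge) auto
    thus "norm z < b" unfolding b_def by simp
  qed
  thus ?thesis unfolding eventually_at_infinity by (intro exI[of _ b]) force
qed

lemma sub_nonneg:
  fixes E :: "complex fls"
  assumes "\<forall>n<0. E $$ n = 0"
  shows "0 \<le> fls_subdegree E"
proof (cases "E = 0")
  case False thus ?thesis using assms by (intro fls_subdegree_geI) auto
qed simp


lemma inf_low:
  assumes sol: "A4_rational_solution \<alpha> f"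
  shows "\<forall>j<5. \<forall>n< -1. LI f j $$ n = 0"
  by (rule INF(1)[OF E_inf[OF sol] S_inf[OF sol]])

lemma one_over_exp: "(\<lambda>w::complex. 1 / w) has_laurent_expansion fls_X_inv"
proof -
  have "inverse has_laurent_expansion (fls_X_inv :: complex fls)" by (intro laurent_expansion_intros)
  moreover have "(\<lambda>w::complex. 1 / w) = inverse" by (auto simp: inverse_eq_divide)
  ultimately show ?thesis by simp
qed

lemma rep:
  assumes sol: "A4_rational_solution \<alpha> f" and i: "i < 5"
  defines "P \<equiv> {z. is_pole (f i) z}" and "rs \<equiv> (\<lambda>z. residue (f i) z)" and "a \<equiv> LI f i $$ (-1)"
  shows "finite P"
    and "eventually (\<lambda>t. f i t = a * t + (\<Sum>p\<in>P. rs p / (t - p))) cofinite"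
    and "res_inf (f i) = - (\<Sum>p\<in>P. rs p)"
proof -
  obtain PP QQ where PQ: "\<forall>j<5. QQ j \<noteq> 0 \<and> f j = (\<lambda>t. poly (PP j) t / poly (QQ j) t)"
    using sol by (rule sol_polys)
  define q where "q = QQ i"
  have q0: "q \<noteq> 0" and feq: "f i = (\<lambda>t. poly (PP i) t / poly q t)" using PQ i unfolding q_def by auto
  define Zq where "Zq = {t. poly q t = 0}"
  have finZq: "finite Zq" unfolding Zq_def using q0 by (rule poly_roots_finite)
  have fan: "f i analytic_on {t}" if "t \<notin> Zq" for t
    unfolding feq using that unfolding Zq_def by (intro analytic_intros poly_analytic) auto
  have PZ: "P \<subseteq> Zq"
  proof
    fix t assume "t \<in> P"
    hence "is_pole (f i) t" unfolding P_def by simp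
    thus "t \<in> Zq" using fan analytic_at_imp_no_pole by blast
  qed
  show finP: "finite P" using finite_subset[OF PZ finZq] .
  define R where "R = (\<lambda>t. f i t - a * t - (\<Sum>p\<in>P. rs p / (t - p)))"
  have Rz: "remove_sings R analytic_on {z}" for z
  proof -
    define E where "E = LF f z i - fls_const a * (fls_const z + fls_X)
        - (\<Sum>p\<in>P. laurent_expansion (\<lambda>t. rs p / (t - p)) z)"
    have RE: "(\<lambda>w. R (z + w)) has_laurent_expansion E"
      unfolding R_def E_def
      by (intro has_laurent_expansion_diff has_laurent_expansion_cmult_left has_laurent_expansion_sum
          LF_exp[OF sol i] term_fin(1) laurent_expansion_intros)
    have En: "E $$ n = 0" if n: "n < 0" for n
    proof -
      have s1: "(\<Sum>p\<in>P. laurent_expansion (\<lambda>t. rs p / (t - p)) z $$ n)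
              = (\<Sum>p\<in>P. (if n = -1 \<and> p = z then rs p else 0))"
        using term_fin(2) n by (intro sum.cong refl) auto
      have s2: "(\<Sum>p\<in>P. (if n = -1 \<and> p = z then rs p else 0)) = (if n = -1 \<and> z \<in> P then rs z else 0)"
        using finP by (cases "n = -1") (auto simp: sum.delta')
      have "E $$ n = LF f z i $$ n - (if n = -1 \<and> z \<in> P then rs z else 0)"
        unfolding E_def using n s1 s2 by (simp add: fls_nth_sum)
      also have "\<dots> = 0"
      proof (cases "n = -1")
        case True
        show ?thesis
        proof (cases "z \<in> P")
          case True2: True
          thus ?thesis using True residue_LF[OF sol i] unfolding rs_def by simp
        next
          case False
          hence "\<not> is_pole (f i) z" unfolding P_def by simp
          thus ?thesis using True False pole_iff[OF sol i] by simp
        qed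
      next
        case False
        thus ?thesis using fin_low[OF sol] i n by simp
      qed
      finally show ?thesis .
    qed
    have sub: "0 \<le> fls_subdegree E" using En by (intro sub_nonneg) auto
    have "isolated_singularity_at R z" by (rule has_laurent_expansion_isolated[OF RE])
    moreover have "R \<midarrow>z\<rightarrow> E $$ 0" by (rule has_laurent_expansion_imp_tendsto[OF RE sub])
    ultimately show ?thesis by (rule remove_sings_analytic_at)
  qed
  have "remove_sings R analytic_on UNIV"
    using Rz analytic_on_analytic_at by blast
  hence holo: "remove_sings R holomorphic_on UNIV"
    by (rule analytic_imp_holomorphic)
  define Einf where "Einf = LI f i - fls_const a * fls_X_inv
        - (\<Sum>p\<in>P. laurent_expansion (\<lambda>w. rs p / (1/w - p)) 0)"
  have REinf: "(\<lambda>w. R (1/w)) has_laurent_expansion Einf"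
    unfolding R_def Einf_def
    by (intro has_laurent_expansion_diff has_laurent_expansion_cmult_left has_laurent_expansion_sum
          LI_exp[OF sol i] term_inf(1) one_over_exp)
  have Einf_n: "Einf $$ n = 0" if n: "n \<le> 0" for n
  proof -
    have s1: "(\<Sum>p\<in>P. laurent_expansion (\<lambda>w. rs p / (1/w - p)) 0 $$ n) = 0"
      using term_inf(2) n by (intro sum.neutral) auto
    have "Einf $$ n = LI f i $$ n - a * (if n = -1 then 1 else 0)"
      unfolding Einf_def using s1 by (simp add: fls_nth_sum)
    also have "\<dots> = 0"
    proof -
      consider "n < -1" | "n = -1" | "n = 0" using n by linarith
      thus ?thesis
      proof cases
        case 1 thus ?thesis using inf_low[OF sol] i by simp
      next
        case 2 thus ?thesis unfolding a_def by simp
      next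
        case 3 thus ?thesis using LI_0[OF sol i] by simp
      qed
    qed
    finally show ?thesis .
  qed
  have subinf: "0 \<le> fls_subdegree Einf" using Einf_n by (intro sub_nonneg) auto
  have "(\<lambda>w. R (1/w)) \<midarrow>0\<rightarrow> Einf $$ 0" by (rule has_laurent_expansion_imp_tendsto_0[OF REinf subinf])
  hence "(\<lambda>w. R (1/w)) \<midarrow>0\<rightarrow> 0" using Einf_n[of 0] by simp
  hence "filterlim (\<lambda>w. R (1/w)) (nhds 0) (filtermap inverse at_infinity)"
    by (simp add: at_to_infinity[symmetric])
  hence "((\<lambda>x. R (1 / inverse x)) \<longlongrightarrow> 0) at_infinity"
    by (simp add: filterlim_filtermap)
  moreover have "(\<lambda>x. R (1 / inverse x)) = R" by (simp add: fun_eq_iff divide_inverse)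
  ultimately have Rlim: "(R \<longlongrightarrow> 0) at_infinity" by simp
  define Z where "Z = Zq \<union> P"
  have finZ: "finite Z" unfolding Z_def using finZq finP by simp
  have Ran: "R analytic_on {t}" if t: "t \<notin> Z" for t
  proof -
    have tZ: "t \<notin> Zq" "t \<notin> P" using t unfolding Z_def by auto
    have "(\<lambda>t. \<Sum>p\<in>P. rs p / (t - p)) analytic_on {t}"
      using tZ(2) by (intro analytic_intros) auto
    thus ?thesis unfolding R_def using fan[OF tZ(1)] tZ by (intro analytic_intros) auto
  qed
  have "eventually (\<lambda>t. t \<notin> Z) at_infinity" by (rule ev_infinity_avoid[OF finZ])
  hence "eventually (\<lambda>t. R t = remove_sings R t) at_infinity"
    by eventually_elim (simp add: Ran)
  hence "(remove_sings R \<longlongrightarrow> 0) at_infinity" by (rule Lim_transform_eventually[OF Rlim])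
  hence rs0: "remove_sings R z = 0" for z using Liouville_weak[OF holo] by blast
  have R0: "R t = 0" if "t \<notin> Z" for t
    using rs0[of t] Ran[OF that] by simp
  show "eventually (\<lambda>t. f i t = a * t + (\<Sum>p\<in>P. rs p / (t - p))) cofinite"
    unfolding eventually_cofinite
  proof (rule finite_subset[OF _ finZ])
    show "{t. \<not> f i t = a * t + (\<Sum>p\<in>P. rs p / (t - p))} \<subseteq> Z"
      using R0 unfolding R_def by (auto simp: algebra_simps)
  qed
  have "eventually (\<lambda>w. w \<noteq> 0 \<and> 1/w \<notin> Z) (at (0::complex))" by (rule ev_inv[OF finZ])
  hence "eventually (\<lambda>w. R (1/w) = 0) (at (0::complex))" by eventually_elim (simp add: R0)
  hence "(\<lambda>w. R (1/w)) has_laurent_expansion 0"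
    using has_laurent_expansion_cong[of "\<lambda>w. R (1/w)" "\<lambda>_. 0" 0 0] by simp
  hence E0: "Einf = 0" using REinf by (metis has_laurent_expansion_unique)
  have "Einf $$ 1 = LI f i $$ 1 - (\<Sum>p\<in>P. rs p)"
  proof -
    have "(\<Sum>p\<in>P. laurent_expansion (\<lambda>w. rs p / (1/w - p)) 0 $$ 1) = (\<Sum>p\<in>P. rs p)"
      using term_inf(3) by (intro sum.cong refl) auto
    thus ?thesis unfolding Einf_def by (simp add: fls_nth_sum)
  qed
  hence L1: "LI f i $$ 1 = (\<Sum>p\<in>P. rs p)" using E0 by simp
  have "(\<lambda>w. f i (1/w) * w powi (-2)) has_laurent_expansion fls_shift 2 (LI f i)"
    by (rule has_laurent_expansion_shift'[OF LI_exp[OF sol i]])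
  moreover have "(\<lambda>w. f i (1/w) * w powi (-2)) = (\<lambda>w. f i (1/w) / w ^ 2)"
    by (simp add: power_int_minus divide_inverse)
  ultimately have "(\<lambda>w. f i (1/w) / w ^ 2) has_laurent_expansion fls_shift 2 (LI f i)" by simp
  hence "residue (\<lambda>w. f i (1/w) / w ^ 2) 0 = fls_residue (fls_shift 2 (LI f i))"
    by (rule has_laurent_expansion_residue_0)
  hence "residue (\<lambda>w. f i (1/w) / w ^ 2) 0 = LI f i $$ 1" by simp
  thus "res_inf (f i) = - (\<Sum>p\<in>P. rs p)" unfolding res_inf_def L1 by simp
qed


definition half :: "complex set \<Rightarrow> complex set" where
  "half P = {p\<in>P. 0 < Re p \<or> (Re p = 0 \<and> 0 < Im p)}"

lemma half_sub: "half P \<subseteq> P" by (auto simp: half_def)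
lemma half_nz: "0 \<notin> half P" by (auto simp: half_def)
lemma half_neg: "p \<in> half P \<Longrightarrow> -p \<notin> half P" by (auto simp: half_def)
lemma half_cover: "p \<in> P \<Longrightarrow> p \<noteq> 0 \<Longrightarrow> p \<notin> half P \<Longrightarrow> -p \<in> P \<Longrightarrow> -p \<in> half P"
  by (auto simp: half_def complex_eq_iff)

lemma sum_half:
  fixes g :: "complex \<Rightarrow> complex"
  assumes fin: "finite P" and sym: "\<forall>p\<in>P. -p \<in> P"
  shows "(\<Sum>p\<in>P. g p) = (if 0 \<in> P then g 0 else 0) + (\<Sum>p\<in>half P. g p + g (-p))"
proof -
  define H where "H = half P"
  have finH: "finite H" unfolding H_def using fin half_sub finite_subset by blast
  have Peq: "P = (P \<inter> {0}) \<union> (H \<union> uminus ` H)"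
  proof
    show "P \<subseteq> (P \<inter> {0}) \<union> (H \<union> uminus ` H)"
    proof
      fix p assume p: "p \<in> P"
      show "p \<in> (P \<inter> {0}) \<union> (H \<union> uminus ` H)"
      proof (cases "p = 0 \<or> p \<in> H")
        case True thus ?thesis using p by auto
      next
        case False
        hence "-p \<in> H" unfolding H_def using p sym half_cover by blast
        hence "- (-p) \<in> uminus ` H" by (rule imageI)
        thus ?thesis by simp
      qed
    qed
    show "(P \<inter> {0}) \<union> (H \<union> uminus ` H) \<subseteq> P"
      unfolding H_def using half_sub sym by auto
  qed
  have d1: "(P \<inter> {0}) \<inter> (H \<union> uminus ` H) = {}"
    unfolding H_def using half_nz by auto
  have d2: "H \<inter> uminus ` H = {}"
    unfolding H_def using half_neg by fastforce
  have "(\<Sum>p\<in>P. g p) = (\<Sum>p\<in>P \<inter> {0}. g p) + (\<Sum>p\<in>H \<union> uminus ` H. g p)"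
    by (subst Peq, rule sum.union_disjoint) (use fin finH d1 in auto)
  also have "(\<Sum>p\<in>P \<inter> {0}. g p) = (if 0 \<in> P then g 0 else 0)"
    by (cases "0 \<in> P") auto
  also have "(\<Sum>p\<in>H \<union> uminus ` H. g p) = (\<Sum>p\<in>H. g p) + (\<Sum>p\<in>uminus ` H. g p)"
    by (rule sum.union_disjoint) (use finH d2 in auto)
  also have "(\<Sum>p\<in>uminus ` H. g p) = (\<Sum>p\<in>H. g (-p))"
    by (subst sum.reindex) (auto simp: inj_on_def)
  finally show ?thesis unfolding H_def by (simp add: sum.distrib)
qed

lemma res_vals:
  assumes sol: "A4_rational_solution \<alpha> f" and i: "i < 5" and p: "is_pole (f i) p"
  shows "residue (f i) p \<in> {1, -1, 3, -3}"
proof -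
  define r where "r = (\<lambda>k. LF f p k $$ (-1))"
  have h1: "\<forall>j<5. r j * (1 + Bv r j) = 0" unfolding r_def by (rule FIN(2)[OF E_fin[OF sol] S_fin[OF sol]])
  have h2: "(\<Sum>j<5. r j) = 0" unfolding r_def by (rule FIN(3)[OF E_fin[OF sol] S_fin[OF sol]])
  have "r i = 0 \<or> r i = 1 \<or> r i = -1 \<or> r i = 3 \<or> r i = -3" by (rule AL3v[OF h1 h2 i])
  moreover have "r i \<noteq> 0" using pole_iff[OF sol i] p unfolding r_def by simp
  moreover have "residue (f i) p = r i" unfolding r_def by (rule residue_LF[OF sol i])
  ultimately show ?thesis by auto
qed

lemma a_vals:
  assumes sol: "A4_rational_solution \<alpha> f" and i: "i < 5"
  shows "LI f i $$ (-1) \<in> {0, 1, -1, 1/3, 1/5}"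
proof -
  define r where "r = (\<lambda>k. LI f k $$ (-1))"
  have h1: "\<forall>j<5. r j * Bv r j = 0" unfolding r_def by (rule INF(2)[OF E_inf[OF sol] S_inf[OF sol]])
  have h2: "(\<Sum>j<5. r j) = 1" unfolding r_def by (rule INF(3)[OF E_inf[OF sol] S_inf[OF sol]])
  have "r i = 0 \<or> r i = 1 \<or> r i = -1 \<or> r i = 1/3 \<or> r i = 1/5" by (rule AL2av[OF h1 h2 i])
  thus ?thesis unfolding r_def by auto
qed

lemma pole_sym:
  assumes sol: "A4_rational_solution \<alpha> f" and i: "i < 5" and p: "is_pole (f i) p"
  shows "is_pole (f i) (-p) \<and> residue (f i) (-p) = residue (f i) p"
  using pole_iff[OF sol i] residue_LF[OF sol i] LF_sym[OF sol i, of p] p by metis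


theorem corollary1p6:
  fixes \<alpha> :: "nat \<Rightarrow> complex" and f :: "nat \<Rightarrow> complex \<Rightarrow> complex" and i :: nat
  assumes sol: "A4_rational_solution \<alpha> f" and i: "i < 5"
  shows
    "(\<forall>c. c \<noteq> 0 \<and> is_pole (f i) c \<longrightarrow>
         is_pole (f i) (- c) \<and> residue (f i) c = residue (f i) (- c))
   \<and> ((\<exists>k::int. res_inf (f i) = of_int (2 * k)) \<longrightarrow>
         \<not> is_pole (f i) 0 \<and>
         (\<exists>a n (\<epsilon>::nat \<Rightarrow> complex) (c::nat \<Rightarrow> complex).
            a \<in> {0, 1, -1, 1/3, 1/5} \<and>
            (\<forall>j\<in>{1..n}. \<epsilon> j \<in> {1, -1, 3, -3} \<and> c j \<noteq> 0) \<and>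
            (\<forall>j\<in>{1..n}. \<forall>k\<in>{1..n}. j \<noteq> k \<longrightarrow> c j \<noteq> c k \<and> c j \<noteq> - c k) \<and>
            (\<forall>\<^sub>F t in cofinite. f i t =
               a * t + (\<Sum>j=1..n. \<epsilon> j / (t - c j) + \<epsilon> j / (t + c j)))))
   \<and> ((\<exists>k::int. res_inf (f i) = of_int (2 * k + 1)) \<longrightarrow>
         is_pole (f i) 0 \<and>
         (\<exists>a n (\<epsilon>::nat \<Rightarrow> complex) (c::nat \<Rightarrow> complex).
            (\<forall>j\<in>{0..n}. \<epsilon> j \<in> {1, -1, 3, -3}) \<and>
            (\<forall>j\<in>{1..n}. c j \<noteq> 0) \<and>
            (\<forall>j\<in>{1..n}. \<forall>k\<in>{1..n}. j \<noteq> k \<longrightarrow> c j \<noteq> c k \<and> c j \<noteq> - c k) \<and>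
            (\<forall>\<^sub>F t in cofinite. f i t =
               a * t + \<epsilon> 0 / t + (\<Sum>j=1..n. \<epsilon> j / (t - c j) + \<epsilon> j / (t + c j)))))"
proof -
  note P1 = part1[OF sol i]
  define P where "P = {z. is_pole (f i) z}"
  define rs where "rs = (\<lambda>z. residue (f i) z)"
  define a where "a = LI f i $$ (-1)"
  have finP: "finite P"
    and cof: "eventually (\<lambda>t. f i t = a * t + (\<Sum>p\<in>P. rs p / (t - p))) cofinite"
    and RI: "res_inf (f i) = - (\<Sum>p\<in>P. rs p)"
    using rep[OF sol i] unfolding P_def rs_def a_def by auto
  have sym: "\<forall>p\<in>P. -p \<in> P" and rsym: "\<forall>p\<in>P. rs (-p) = rs p"
    using pole_sym[OF sol i] unfolding P_def rs_def by auto
  have rv: "\<forall>p\<in>P. rs p \<in> {1, -1, 3, -3}"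
    using res_vals[OF sol i] unfolding P_def rs_def by auto
  have av: "a \<in> {0, 1, -1, 1/3, 1/5}" using a_vals[OF sol i] unfolding a_def .
  define H where "H = half P"
  have HP: "H \<subseteq> P" unfolding H_def by (rule half_sub)
  have finH: "finite H" using finite_subset[OF HP finP] .
  define n where "n = card H"
  obtain c where c: "bij_betw c {1..n} H" unfolding n_def using ex_bij_betw_nat_finite_1[OF finH] by blast
  have cH: "c j \<in> H" if "j \<in> {1..n}" for j using bij_betwE[OF c] that by blast
  have cP: "c j \<in> P" if "j \<in> {1..n}" for j using cH[OF that] HP by auto
  have c0: "c j \<noteq> 0" if "j \<in> {1..n}" for j
  proof
    assume "c j = 0"
    with cH[OF that] have "0 \<in> H" by simp
    thus False using half_nz unfolding H_def by blast
  qed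
  have cinj: "c j \<noteq> c k \<and> c j \<noteq> - c k" if "j \<in> {1..n}" "k \<in> {1..n}" "j \<noteq> k" for j k
  proof
    have "inj_on c {1..n}" using c by (simp add: bij_betw_def)
    thus "c j \<noteq> c k" using that unfolding inj_on_def by blast
    show "c j \<noteq> - c k"
    proof
      assume "c j = - c k"
      hence "- c k \<in> H" using cH[OF that(1)] by simp
      thus False using half_neg cH[OF that(2)] unfolding H_def by blast
    qed
  qed
  have intv: "\<forall>p\<in>P. \<exists>m::int. rs p = of_int m \<and> odd m"
  proof
    fix p assume "p \<in> P"
    hence "rs p \<in> {1, -1, 3, -3}" using rv by blast
    hence "rs p = 1 \<or> rs p = -1 \<or> rs p = 3 \<or> rs p = -3" by simp
    thus "\<exists>m::int. rs p = of_int m \<and> odd m"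
    proof (elim disjE)
      assume "rs p = 1" thus ?thesis by (intro exI[of _ 1]) simp
    next
      assume "rs p = -1" thus ?thesis by (intro exI[of _ "-1"]) simp
    next
      assume "rs p = 3" thus ?thesis by (intro exI[of _ 3]) simp
    next
      assume "rs p = -3" thus ?thesis by (intro exI[of _ "-3"]) simp
    qed
  qed
  from bchoice[OF intv] obtain m where m: "\<forall>p\<in>P. rs p = of_int (m p) \<and> odd (m p)" by blast
  define S where "S = (\<Sum>p\<in>H. m p)"
  have sumH: "(\<Sum>p\<in>H. rs p + rs (-p)) = of_int (2 * S)"
  proof -
    have "(\<Sum>p\<in>H. rs p + rs (-p)) = (\<Sum>p\<in>H. of_int (2 * m p))"
      using HP rsym m by (intro sum.cong refl) auto
    thus ?thesis unfolding S_def by (simp add: sum_distrib_left)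
  qed
  have RI1: "res_inf (f i) = - ((if 0 \<in> P then rs 0 else 0) + of_int (2 * S))"
    using RI sum_half[OF finP sym, of rs] sumH unfolding H_def by simp
  have RI2: "res_inf (f i) = - ((if 0 \<in> P then of_int (m 0) else 0) + of_int (2 * S))"
  proof (cases "0 \<in> P")
    case True thus ?thesis using RI1 m by simp
  next
    case False thus ?thesis using RI1 by simp
  qed
  have form: "(\<Sum>p\<in>P. rs p / (t - p)) = (if 0 \<in> P then rs 0 / t else 0)
      + (\<Sum>j=1..n. rs (c j) / (t - c j) + rs (c j) / (t + c j))" for t
  proof -
    have "(\<Sum>p\<in>P. rs p / (t - p)) = (if 0 \<in> P then rs 0 / (t - 0) else 0)
        + (\<Sum>p\<in>H. rs p / (t - p) + rs (-p) / (t - - p))"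
      using sum_half[OF finP sym, of "\<lambda>p. rs p / (t - p)"] unfolding H_def by simp
    also have "(\<Sum>p\<in>H. rs p / (t - p) + rs (-p) / (t - - p)) = (\<Sum>p\<in>H. rs p / (t - p) + rs p / (t + p))"
      using HP rsym by (intro sum.cong refl) auto
    also have "\<dots> = (\<Sum>j=1..n. rs (c j) / (t - c j) + rs (c j) / (t + c j))"
      by (rule sum.reindex_bij_betw[OF c, symmetric])
    finally show ?thesis by simp
  qed
  show ?thesis
  proof (intro conjI impI)
    show "\<forall>c. c \<noteq> 0 \<and> is_pole (f i) c \<longrightarrow> is_pole (f i) (- c) \<and> residue (f i) c = residue (f i) (- c)"
      by (rule P1)
  next
    assume "\<exists>k::int. res_inf (f i) = of_int (2 * k)"
    then obtain k :: int where k: "res_inf (f i) = of_int (2 * k)" by blast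
    have n0: "0 \<notin> P"
    proof
      assume "0 \<in> P"
      hence "of_int (2 * k) = (of_int (- (m 0 + 2 * S)) :: complex)" using RI2 k by simp
      hence "2 * k = - (m 0 + 2 * S)" by (simp only: of_int_eq_iff)
      hence "even (m 0)" by presburger
      thus False using m \<open>0 \<in> P\<close> by blast
    qed
    thus "\<not> is_pole (f i) 0" unfolding P_def by simp
    show "\<exists>a n (\<epsilon>::nat \<Rightarrow> complex) (c::nat \<Rightarrow> complex).
            a \<in> {0, 1, -1, 1/3, 1/5} \<and>
            (\<forall>j\<in>{1..n}. \<epsilon> j \<in> {1, -1, 3, -3} \<and> c j \<noteq> 0) \<and>
            (\<forall>j\<in>{1..n}. \<forall>k\<in>{1..n}. j \<noteq> k \<longrightarrow> c j \<noteq> c k \<and> c j \<noteq> - c k) \<and>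
            (\<forall>\<^sub>F t in cofinite. f i t =
               a * t + (\<Sum>j=1..n. \<epsilon> j / (t - c j) + \<epsilon> j / (t + c j)))"
    proof -
      have A: "\<forall>j\<in>{1..n}. rs (c j) \<in> {1, -1, 3, -3} \<and> c j \<noteq> 0" using rv cP c0 by blast
      have C: "\<forall>j\<in>{1..n}. \<forall>k\<in>{1..n}. j \<noteq> k \<longrightarrow> c j \<noteq> c k \<and> c j \<noteq> - c k" using cinj by blast
      have D: "\<forall>\<^sub>F t in cofinite. f i t = a * t + (\<Sum>j=1..n. rs (c j) / (t - c j) + rs (c j) / (t + c j))"
        using cof by eventually_elim (simp add: form n0)
      show ?thesis by (intro exI[of _ a] exI[of _ n] exI[of _ "\<lambda>j. rs (c j)"] exI[of _ c] conjI av A C D)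
    qed
  next
    assume "\<exists>k::int. res_inf (f i) = of_int (2 * k + 1)"
    then obtain k :: int where k: "res_inf (f i) = of_int (2 * k + 1)" by blast
    have n0: "0 \<in> P"
    proof (rule ccontr)
      assume "0 \<notin> P"
      hence "of_int (2 * k + 1) = (of_int (- (2 * S)) :: complex)" using RI2 k by simp
      hence "2 * k + 1 = - (2 * S)" by (simp only: of_int_eq_iff)
      thus False by presburger
    qed
    thus "is_pole (f i) 0" unfolding P_def by simp
    show "\<exists>a n (\<epsilon>::nat \<Rightarrow> complex) (c::nat \<Rightarrow> complex).
            (\<forall>j\<in>{0..n}. \<epsilon> j \<in> {1, -1, 3, -3}) \<and>
            (\<forall>j\<in>{1..n}. c j \<noteq> 0) \<and>
            (\<forall>j\<in>{1..n}. \<forall>k\<in>{1..n}. j \<noteq> k \<longrightarrow> c j \<noteq> c k \<and> c j \<noteq> - c k) \<and>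
            (\<forall>\<^sub>F t in cofinite. f i t =
               a * t + \<epsilon> 0 / t + (\<Sum>j=1..n. \<epsilon> j / (t - c j) + \<epsilon> j / (t + c j)))"
    proof -
      define eps where "eps = (\<lambda>j::nat. if j = 0 then rs 0 else rs (c j))"
      have A: "\<forall>j\<in>{0..n}. eps j \<in> {1, -1, 3, -3}"
        unfolding eps_def using rv cP n0 by auto
      have B: "\<forall>j\<in>{1..n}. c j \<noteq> 0" using c0 by blast
      have C: "\<forall>j\<in>{1..n}. \<forall>k\<in>{1..n}. j \<noteq> k \<longrightarrow> c j \<noteq> c k \<and> c j \<noteq> - c k" using cinj by blast
      have sc: "(\<Sum>j=1..n. eps j / (t - c j) + eps j / (t + c j))
          = (\<Sum>j=1..n. rs (c j) / (t - c j) + rs (c j) / (t + c j))" for t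
        unfolding eps_def by (intro sum.cong refl) auto
      have D: "\<forall>\<^sub>F t in cofinite. f i t = a * t + eps 0 / t +
          (\<Sum>j=1..n. eps j / (t - c j) + eps j / (t + c j))"
        using cof by eventually_elim (simp add: form n0 sc add.assoc eps_def)
      show ?thesis by (intro exI[of _ a] exI[of _ n] exI[of _ eps] exI[of _ c] conjI A B C D)
    qed
  qed
qed

end
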